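(* Let $p\ge3$ be prime, $G=\mathrm{GL}_2(\mathbb{F}_p)$, and $H\subset G$ a subgroup isomorphic to the quaternion group $H_8$. Then $$N_G(H)/C(G)\simeq \mathrm{Aut}(H)\simeq S_4,$$ the first isomorphism being induced by conjugation. Moreover: (a) if $(2/p)=1$, every matrix in $N_G(H)$ has square determinant; (b) if $(2/p)=-1$, the matrices in $N_G(H)$ with square determinant are exactly those whose image in $\mathrm{Aut}(H)\simeq S_4$ lies in the subgroup isomorphic to $A_4$.
   Context: $N_G(H)$ is the normalizer of $H$ in $G$, $C(G)$ the center of $G$ (scalar matrices), $S_4,A_4$ the symmetric and alternating groups on 4 letters, and $(\cdot/p)$ the Legendre symbol. *)

theory Defs
  imports "HOL-Algebra.Group_Action" "HOL-Algebra.Sym_Groups" "HOL-Number_Theory.Number_Theory"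
begin

text \<open>2x2 matrices over F_p are quadruples (a,b,c,d) standing for the matrix [[a,b],[c,d]],
  with entries represented by the integers 0..p-1.\<close>

type_synonym mat2 = "int \<times> int \<times> int \<times> int"

definition mat2_det :: "nat \<Rightarrow> mat2 \<Rightarrow> int" where
  "mat2_det p M = (case M of (a,b,c,d) \<Rightarrow> (a*d - b*c) mod int p)"

definition mat2_mult :: "nat \<Rightarrow> mat2 \<Rightarrow> mat2 \<Rightarrow> mat2" where
  "mat2_mult p M N = (case M of (a,b,c,d) \<Rightarrow> case N of (e,f,g,h) \<Rightarrow>
     ((a*e + b*g) mod int p, (a*f + b*h) mod int p, (c*e + d*g) mod int p, (c*f + d*h) mod int p))"

definition GL2_carrier :: "nat \<Rightarrow> mat2 set" where
  "GL2_carrier p = {M. fst M \<in> {0..<int p} \<and> fst (snd M) \<in> {0..<int p}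
                      \<and> fst (snd (snd M)) \<in> {0..<int p} \<and> snd (snd (snd M)) \<in> {0..<int p}
                      \<and> mat2_det p M \<noteq> 0}"

definition GL2 :: "nat \<Rightarrow> mat2 monoid" where
  "GL2 p = \<lparr> carrier = GL2_carrier p, monoid.mult = mat2_mult p, one = (1,0,0,1) \<rparr>"

definition GL2_scalars :: "nat \<Rightarrow> mat2 set" where
  "GL2_scalars p = {(a,0,0,a) | a. a \<in> {1..<int p}}"

text \<open>The quaternion group H_8 = {\<plusminus>1, \<plusminus>i, \<plusminus>j, \<plusminus>k} under the Hamilton product,
  quaternions a + b i + c j + d k being written as quadruples (a,b,c,d).\<close>
definition ham_mult :: "mat2 \<Rightarrow> mat2 \<Rightarrow> mat2" where
  "ham_mult x y = (case x of (a1,b1,c1,d1) \<Rightarrow> case y of (a2,b2,c2,d2) \<Rightarrow>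
     (a1*a2 - b1*b2 - c1*c2 - d1*d2,
      a1*b2 + b1*a2 + c1*d2 - d1*c2,
      a1*c2 - b1*d2 + c1*a2 + d1*b2,
      a1*d2 + b1*c2 - c1*b2 + d1*a2))"

definition quaternion_group :: "(int \<times> int \<times> int \<times> int) monoid" where
  "quaternion_group = \<lparr> carrier = {(1,0,0,0), (-1,0,0,0), (0,1,0,0), (0,-1,0,0),
                                   (0,0,1,0), (0,0,-1,0), (0,0,0,1), (0,0,0,-1)},
                        monoid.mult = ham_mult,
                        one = (1,0,0,0) \<rparr>"

definition conj_aut :: "('a, 'b) monoid_scheme \<Rightarrow> 'a set \<Rightarrow> 'a \<Rightarrow> ('a \<Rightarrow> 'a)" where
  "conj_aut G H g = (\<lambda>h \<in> H. g \<otimes>\<^bsub>G\<^esub> h \<otimes>\<^bsub>G\<^esub> inv\<^bsub>G\<^esub> g)"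

end

theory Submission
  imports Defs
begin


definition e1 :: "mat2 \<Rightarrow> int" where "e1 M = fst M"
definition e2 :: "mat2 \<Rightarrow> int" where "e2 M = fst (snd M)"
definition e3 :: "mat2 \<Rightarrow> int" where "e3 M = fst (snd (snd M))"
definition e4 :: "mat2 \<Rightarrow> int" where "e4 M = snd (snd (snd M))"

lemma e_simps[simp]: "e1 (a,b,c,d) = a" "e2 (a,b,c,d) = b" "e3 (a,b,c,d) = c" "e4 (a,b,c,d) = d"
  by (simp_all add: e1_def e2_def e3_def e4_def)

lemma mat_eq_iff: "(M::mat2) = N \<longleftrightarrow> e1 M = e1 N \<and> e2 M = e2 N \<and> e3 M = e3 N \<and> e4 M = e4 N"
  by (cases M; cases N) (auto simp: e1_def e2_def e3_def e4_def)

lemma mat_split: "(M::mat2) = (e1 M, e2 M, e3 M, e4 M)"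
  by (simp add: mat_eq_iff)

definition cm :: "nat \<Rightarrow> mat2 \<Rightarrow> mat2" where
  "cm p M = (e1 M mod int p, e2 M mod int p, e3 M mod int p, e4 M mod int p)"
definition mm :: "mat2 \<Rightarrow> mat2 \<Rightarrow> mat2" where
  "mm M N = (e1 M * e1 N + e2 M * e3 N, e1 M * e2 N + e2 M * e4 N,
             e3 M * e1 N + e4 M * e3 N, e3 M * e2 N + e4 M * e4 N)"
definition madd :: "mat2 \<Rightarrow> mat2 \<Rightarrow> mat2" where
  "madd M N = (e1 M + e1 N, e2 M + e2 N, e3 M + e3 N, e4 M + e4 N)"
definition smul :: "int \<Rightarrow> mat2 \<Rightarrow> mat2" where
  "smul c M = (c * e1 M, c * e2 M, c * e3 M, c * e4 M)"
definition det0 :: "mat2 \<Rightarrow> int" where "det0 M = e1 M * e4 M - e2 M * e3 M"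
definition adj :: "mat2 \<Rightarrow> mat2" where "adj M = (e4 M, - e2 M, - e3 M, e1 M)"

lemma e_cm[simp]: "e1 (cm p M) = e1 M mod int p" "e2 (cm p M) = e2 M mod int p"
  "e3 (cm p M) = e3 M mod int p" "e4 (cm p M) = e4 M mod int p" by (simp_all add: cm_def)
lemma e_mm[simp]: "e1 (mm M N) = e1 M * e1 N + e2 M * e3 N" "e2 (mm M N) = e1 M * e2 N + e2 M * e4 N"
  "e3 (mm M N) = e3 M * e1 N + e4 M * e3 N" "e4 (mm M N) = e3 M * e2 N + e4 M * e4 N" by (simp_all add: mm_def)
lemma e_madd[simp]: "e1 (madd M N) = e1 M + e1 N" "e2 (madd M N) = e2 M + e2 N"
  "e3 (madd M N) = e3 M + e3 N" "e4 (madd M N) = e4 M + e4 N" by (simp_all add: madd_def)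
lemma e_smul[simp]: "e1 (smul c M) = c * e1 M" "e2 (smul c M) = c * e2 M"
  "e3 (smul c M) = c * e3 M" "e4 (smul c M) = c * e4 M" by (simp_all add: smul_def)
lemma e_adj[simp]: "e1 (adj M) = e4 M" "e2 (adj M) = - e2 M" "e3 (adj M) = - e3 M" "e4 (adj M) = e1 M"
  by (simp_all add: adj_def)

lemma mat2_mult_eq: "mat2_mult p M N = cm p (mm M N)"
  by (cases M; cases N) (simp add: mat2_mult_def cm_def mm_def)
lemma mat2_det_eq: "mat2_det p M = det0 M mod int p"
  by (cases M) (simp add: mat2_det_def det0_def)

lemma mod_cong_lemmas:
  fixes p :: int
  shows "(a mod p * b) mod p = (a * b) mod p" "(b * (a mod p)) mod p = (b * a) mod p"
    "(a mod p + b) mod p = (a + b) mod p" "(b + a mod p) mod p = (b + a) mod p"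
  by (simp_all add: mod_simps)

lemma mod_leaf: "[x mod n = x] (mod n)" by (simp add: cong_def)
lemma cong_uminus': "[a = b] (mod n) \<Longrightarrow> [- a = - (b::int)] (mod n)"
  by (metis cong_def mod_minus_eq)
lemma congI': "[a = b] (mod n) \<Longrightarrow> a mod n = b mod n" by (simp add: cong_def)
lemmas MC = cong_add cong_mult cong_diff cong_uminus' mod_leaf cong_refl

lemma cm_cm[simp]: "cm p (cm p M) = cm p M" by (simp add: mat_eq_iff)

lemma cm_mm_left[simp]: "cm p (mm (cm p M) N) = cm p (mm M N)"
  by (simp add: mat_eq_iff; intro conjI; rule congI', intro MC)
lemma cm_mm_right[simp]: "cm p (mm M (cm p N)) = cm p (mm M N)"
  by (simp add: mat_eq_iff; intro conjI; rule congI', intro MC)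
lemma cm_madd_left[simp]: "cm p (madd (cm p M) N) = cm p (madd M N)"
  by (simp add: mat_eq_iff; intro conjI; rule congI', intro MC)
lemma cm_madd_right[simp]: "cm p (madd M (cm p N)) = cm p (madd M N)"
  by (simp add: mat_eq_iff; intro conjI; rule congI', intro MC)
lemma cm_smul[simp]: "cm p (smul c (cm p M)) = cm p (smul c M)"
  by (simp add: mat_eq_iff; intro conjI; rule congI', intro MC)

lemma mm_assoc: "mm (mm A B) C = mm A (mm B C)"
  by (simp add: mat_eq_iff algebra_simps)
lemma det0_mm: "det0 (mm A B) = det0 A * det0 B"
  by (simp add: det0_def algebra_simps)
lemma det0_cm_mod: "det0 (cm p A) mod int p = det0 A mod int p"
  by (simp add: det0_def; rule congI', intro MC)
lemma mm_adj: "mm (adj A) A = smul (det0 A) (1,0,0,1)" "mm A (adj A) = smul (det0 A) (1,0,0,1)"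
  by (simp_all add: mat_eq_iff det0_def algebra_simps)


lemma inv_mod_exists:
  assumes "prime (P::int)" "\<not> P dvd d"
  shows "\<exists>c. [d * c = 1] (mod P)"
proof -
  have "coprime P d" using assms prime_imp_coprime by blast
  then have "coprime d P" by (simp add: coprime_commute)
  then show ?thesis using cong_solve_coprime_int by blast
qed

lemma mod_self_iff: "(0::int) < P \<Longrightarrow> x mod P = x \<longleftrightarrow> x \<in> {0..<P}"
  by (metis atLeastLessThan_iff mod_pos_pos_trivial pos_mod_bound pos_mod_sign)

lemma GL2_carrier_iff: "p > 0 \<Longrightarrow> M \<in> GL2_carrier p \<longleftrightarrow> cm p M = M \<and> \<not> int p dvd det0 M"
  by (cases M) (simp add: GL2_carrier_def mat2_det_def cm_def det0_def dvd_eq_mod_eq_0 mod_self_iff)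

lemma GL2_simps[simp]: "carrier (GL2 p) = GL2_carrier p" "monoid.mult (GL2 p) = mat2_mult p" "one (GL2 p) = (1,0,0,1)"
  by (simp_all add: GL2_def)

lemma cm_mod_dvd: "int p dvd det0 (cm p M) \<longleftrightarrow> int p dvd det0 M"
  using det0_cm_mod[of p M] by (simp add: dvd_eq_mod_eq_0)

lemma GL2_group:
  assumes "prime p"
  shows "group (GL2 p)"
proof -
  have p0: "p > 0" "p > 1" using prime_gt_1_nat[OF assms] by auto
  have P: "prime (int p)" using assms by simp
  show ?thesis
  proof (rule groupI)
    fix x y assume x: "x \<in> carrier (GL2 p)" and y: "y \<in> carrier (GL2 p)"
    have "\<not> int p dvd det0 x" "\<not> int p dvd det0 y" using x y p0 by (auto simp: GL2_carrier_iff)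
    then have "\<not> int p dvd det0 x * det0 y" using P prime_dvd_multD by blast
    then show "x \<otimes>\<^bsub>GL2 p\<^esub> y \<in> carrier (GL2 p)"
      using p0 by (simp add: GL2_carrier_iff mat2_mult_eq cm_mod_dvd det0_mm)
  next
    show "\<one>\<^bsub>GL2 p\<^esub> \<in> carrier (GL2 p)" using p0 by (simp add: GL2_carrier_iff det0_def cm_def)
  next
    fix x y z assume "x \<in> carrier (GL2 p)" "y \<in> carrier (GL2 p)" "z \<in> carrier (GL2 p)"
    show "x \<otimes>\<^bsub>GL2 p\<^esub> y \<otimes>\<^bsub>GL2 p\<^esub> z = x \<otimes>\<^bsub>GL2 p\<^esub> (y \<otimes>\<^bsub>GL2 p\<^esub> z)"
      by (simp add: mat2_mult_eq mm_assoc)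
  next
    fix x assume x: "x \<in> carrier (GL2 p)"
    then have "cm p x = x" using p0 by (simp add: GL2_carrier_iff)
    then show "\<one>\<^bsub>GL2 p\<^esub> \<otimes>\<^bsub>GL2 p\<^esub> x = x"
      by (simp add: mat2_mult_eq mm_def) (metis mat_split)
  next
    fix x assume x: "x \<in> carrier (GL2 p)"
    then have cx: "cm p x = x" and nd: "\<not> int p dvd det0 x" using p0 by (auto simp: GL2_carrier_iff)
    obtain c where c: "[det0 x * c = 1] (mod int p)" using inv_mod_exists[OF P nd] by blast
    define y where "y = cm p (smul c (adj x))"
    have "y \<otimes>\<^bsub>GL2 p\<^esub> x = cm p (smul (det0 x * c) (1,0,0,1))"
      by (simp add: y_def mat2_mult_eq mat_eq_iff det0_def algebra_simps)
    also have "\<dots> = (1,0,0,1)" using c p0 by (simp add: cm_def cong_def)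
    finally have yx: "y \<otimes>\<^bsub>GL2 p\<^esub> x = \<one>\<^bsub>GL2 p\<^esub>" by simp
    have "det0 y mod int p = (det0 x * (c * c)) mod int p"
      unfolding y_def det0_cm_mod by (simp add: det0_def algebra_simps)
    moreover have "\<not> int p dvd c"
    proof
      assume "int p dvd c"
      then have "(det0 x * c) mod int p = 0" by simp
      moreover have "1 mod int p = 1" using p0 by simp
      ultimately show False using c by (simp add: cong_def)
    qed
    ultimately have "\<not> int p dvd det0 y" using nd P
      by (metis dvd_eq_mod_eq_0 prime_dvd_multD)
    then have "y \<in> carrier (GL2 p)" using p0 by (simp add: GL2_carrier_iff y_def)
    with yx show "\<exists>y\<in>carrier (GL2 p). y \<otimes>\<^bsub>GL2 p\<^esub> x = \<one>\<^bsub>GL2 p\<^esub>" by blast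
  qed
qed


lemma cross_lemma:
  fixes P ap aq ar bp bq br xp xq xr :: int
  assumes A: "P dvd aq*xr - ar*xq" "P dvd ar*xp - ap*xr" "P dvd ap*xq - aq*xp"
    and B: "P dvd bq*xr - br*xq" "P dvd br*xp - bp*xr" "P dvd bp*xq - bq*xp"
    and nz: "\<not> (P dvd xp \<and> P dvd xq \<and> P dvd xr)" and pr: "prime P"
  shows "P dvd aq*br - ar*bq \<and> P dvd ar*bp - ap*br \<and> P dvd ap*bq - aq*bp"
proof -
  define A1 where "A1 = aq*xr - ar*xq"
  define A2 where "A2 = ar*xp - ap*xr"
  define A3 where "A3 = ap*xq - aq*xp"
  define B1 where "B1 = bq*xr - br*xq"
  define B2 where "B2 = br*xp - bp*xr"
  define B3 where "B3 = bp*xq - bq*xp"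
  have d: "P dvd A1" "P dvd A2" "P dvd A3" "P dvd B1" "P dvd B2" "P dvd B3"
    using A B by (simp_all add: A1_def A2_def A3_def B1_def B2_def B3_def)
  have i1: "xp*(aq*br - ar*bq) = - A3*br - A2*bq - ap*B1" "xp*(ar*bp - ap*br) = A2*bp - ap*B2"
     "xp*(ap*bq - aq*bp) = A3*bp - ap*B3"
    by (simp_all add: A1_def A2_def A3_def B1_def B2_def B3_def algebra_simps)
  have i2: "xq*(aq*br - ar*bq) = A1*bq - aq*B1" "xq*(ar*bp - ap*br) = - A1*bp - A3*br - aq*B2"
     "xq*(ap*bq - aq*bp) = A3*bq - aq*B3"
    by (simp_all add: A1_def A2_def A3_def B1_def B2_def B3_def algebra_simps)
  have i3: "xr*(aq*br - ar*bq) = A1*br - ar*B1" "xr*(ar*bp - ap*br) = A2*br - ar*B2"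
     "xr*(ap*bq - aq*bp) = - A2*bq - A1*bp - ar*B3"
    by (simp_all add: A1_def A2_def A3_def B1_def B2_def B3_def algebra_simps)
  have D: "P dvd x * (aq*br - ar*bq) \<and> P dvd x * (ar*bp - ap*br) \<and> P dvd x * (ap*bq - aq*bp)"
    if "x = xp \<or> x = xq \<or> x = xr" for x
    using that d i1 i2 i3 by (auto simp add: dvd_add dvd_diff dvd_mult2 dvd_mult)
  from nz obtain x where x: "x = xp \<or> x = xq \<or> x = xr" "\<not> P dvd x" by blast
  show ?thesis using D[OF x(1)] x(2) pr by (meson prime_dvd_multD)
qed

definition commutes :: "nat \<Rightarrow> mat2 \<Rightarrow> mat2 \<Rightarrow> bool" where
  "commutes p A B \<longleftrightarrow> cm p (mm A B) = cm p (mm B A)"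

lemma commutes_iff:
  "commutes p A X \<longleftrightarrow>
    int p dvd e3 A * (e1 X - e4 X) - (e1 A - e4 A) * e3 X \<and>
    int p dvd (e1 A - e4 A) * e2 X - e2 A * (e1 X - e4 X) \<and>
    int p dvd e2 A * e3 X - e3 A * e2 X"
proof -
  have "commutes p A X \<longleftrightarrow>
    int p dvd (e1 A * e1 X + e2 A * e3 X) - (e1 X * e1 A + e2 X * e3 A) \<and>
    int p dvd (e1 A * e2 X + e2 A * e4 X) - (e1 X * e2 A + e2 X * e4 A) \<and>
    int p dvd (e3 A * e1 X + e4 A * e3 X) - (e3 X * e1 A + e4 X * e3 A) \<and>
    int p dvd (e3 A * e2 X + e4 A * e4 X) - (e3 X * e2 A + e4 X * e4 A)"
    by (simp add: commutes_def mat_eq_iff mod_eq_dvd_iff)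
  moreover have "(e1 A * e1 X + e2 A * e3 X) - (e1 X * e1 A + e2 X * e3 A) = e2 A * e3 X - e3 A * e2 X"
    "(e1 A * e2 X + e2 A * e4 X) - (e1 X * e2 A + e2 X * e4 A) = (e1 A - e4 A) * e2 X - e2 A * (e1 X - e4 X)"
    "(e3 A * e1 X + e4 A * e3 X) - (e3 X * e1 A + e4 X * e3 A) = e3 A * (e1 X - e4 X) - (e1 A - e4 A) * e3 X"
    "(e3 A * e2 X + e4 A * e4 X) - (e3 X * e2 A + e4 X * e4 A) = - (e2 A * e3 X - e3 A * e2 X)"
    by (simp_all add: algebra_simps)
  ultimately show ?thesis by (simp only: dvd_minus_iff) blast
qed

lemma commute_scalar:
  assumes "prime p" "commutes p A X" "commutes p B X" "\<not> commutes p A B"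
  shows "int p dvd e2 X \<and> int p dvd e3 X \<and> int p dvd e1 X - e4 X"
proof (rule ccontr)
  assume nz: "\<not> ?thesis"
  have pr: "prime (int p)" using assms by simp
  have "int p dvd e3 A * (e1 B - e4 B) - (e1 A - e4 A) * e3 B \<and>
    int p dvd (e1 A - e4 A) * e2 B - e2 A * (e1 B - e4 B) \<and>
    int p dvd e2 A * e3 B - e3 A * e2 B"
    using cross_lemma[where P="int p" and ap="e2 A" and aq="e3 A" and ar="e1 A - e4 A" and
       xp="e2 X" and xq="e3 X" and xr="e1 X - e4 X" and bp="e2 B" and bq="e3 B" and br="e1 B - e4 B",
       OF _ _ _ _ _ _ _ pr] assms(2,3) nz unfolding commutes_iff
    by blast
  then show False using assms(4) unfolding commutes_iff by simp
qed


definition Q8 :: "mat2 set" where "Q8 = carrier quaternion_group"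
definition Q8l :: "mat2 list" where "Q8l = [(1,0,0,0), (-1,0,0,0), (0,1,0,0), (0,-1,0,0),
                                   (0,0,1,0), (0,0,-1,0), (0,0,0,1), (0,0,0,-1)]"
lemma Q8_set: "Q8 = set Q8l" by (simp add: Q8_def Q8l_def quaternion_group_def)

abbreviation "qone \<equiv> ((1,0,0,0)::mat2)"
abbreviation "qm \<equiv> ((-1,0,0,0)::mat2)"
abbreviation "qi \<equiv> ((0,1,0,0)::mat2)"
abbreviation "qj \<equiv> ((0,0,1,0)::mat2)"
abbreviation "qk \<equiv> ((0,0,0,1)::mat2)"

definition cnj :: "mat2 \<Rightarrow> mat2" where "cnj w = (e1 w, - e2 w, - e3 w, - e4 w)"
definition nrm :: "mat2 \<Rightarrow> int" where "nrm w = e1 w * e1 w + e2 w * e2 w + e3 w * e3 w + e4 w * e4 w"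
definition rot :: "mat2 \<Rightarrow> mat2 \<Rightarrow> mat2" where
  "rot w q = (let r = ham_mult (ham_mult w q) (cnj w); n = nrm w in (e1 r div n, e2 r div n, e3 r div n, e4 r div n))"

definition W24 :: "mat2 list" where "W24 = [(1,0,0,0),(0,1,0,0),(0,0,1,0),(0,0,0,1),
  (1,1,0,0),(1,-1,0,0),(1,0,1,0),(1,0,-1,0),(1,0,0,1),(1,0,0,-1),(0,1,1,0),(0,1,-1,0),(0,1,0,1),(0,1,0,-1),(0,0,1,1),(0,0,1,-1),
  (1,1,1,1),(1,1,1,-1),(1,1,-1,1),(1,1,-1,-1),(1,-1,1,1),(1,-1,1,-1),(1,-1,-1,1),(1,-1,-1,-1)]"

definition app :: "mat2 \<Rightarrow> mat2 \<Rightarrow> mat2 \<Rightarrow> mat2" where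
  "app u v q = (if q = qone then qone else if q = qm then qm else
                if q = qi then u else if q = (0,-1,0,0) then ham_mult qm u else
                if q = qj then v else if q = (0,0,-1,0) then ham_mult qm v else
                if q = qk then ham_mult u v else ham_mult qm (ham_mult u v))"

definition keyw :: "mat2 \<Rightarrow> mat2 \<times> mat2" where "keyw w = (rot w qi, rot w qj)"
definition kmul :: "mat2 \<times> mat2 \<Rightarrow> mat2 \<times> mat2 \<Rightarrow> mat2 \<times> mat2" where
  "kmul a b = (app (fst a) (snd a) (fst b), app (fst a) (snd a) (snd b))"

lemma C1: "\<forall>x\<in>Q8. \<forall>y\<in>Q8. ham_mult x y \<in> Q8"
  unfolding Q8_set by code_simp
lemma C2: "\<forall>x\<in>Q8. ham_mult x x = qone \<longrightarrow> x = qone \<or> x = qm"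
  unfolding Q8_set by code_simp
lemma C3: "\<forall>u\<in>Q8. \<forall>v\<in>Q8. ham_mult u u = qm \<and> ham_mult v v = qm \<and> v \<noteq> u \<and> v \<noteq> ham_mult qm u
   \<longrightarrow> (u,v) \<in> keyw ` set W24"
  unfolding Q8_set by code_simp
lemma C4: "\<forall>w\<in>set W24. \<forall>q\<in>Q8. ham_mult (ham_mult w q) (cnj w) = smul (nrm w) (rot w q) \<and> rot w q \<in> Q8"
  unfolding Q8_set by code_simp
lemma C5: "\<forall>w\<in>set W24. nrm w = 1 \<or> nrm w = 2 \<or> nrm w = 4"
  by code_simp

definition dv :: "nat \<Rightarrow> mat2" where
  "dv m = (if m = 1 then (0,1,1,1) else if m = 2 then (0,1,-1,-1) else if m = 3 then (0,-1,1,-1) else (0,-1,-1,1))"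
definition act :: "mat2 \<times> mat2 \<Rightarrow> mat2 \<Rightarrow> mat2" where
  "act a x = madd (madd (smul (e2 x) (fst a)) (smul (e3 x) (snd a))) (smul (e4 x) (ham_mult (fst a) (snd a)))"
definition idx :: "mat2 \<Rightarrow> nat" where
  "idx y = (if y = dv 1 \<or> y = smul (-1) (dv 1) then 1 else if y = dv 2 \<or> y = smul (-1) (dv 2) then 2
            else if y = dv 3 \<or> y = smul (-1) (dv 3) then 3 else 4)"
definition tbl :: "mat2 \<times> mat2 \<Rightarrow> nat list" where "tbl a = map (\<lambda>m. idx (act a (dv m))) [1,2,3,4]"
definition lcomp :: "nat list \<Rightarrow> nat list \<Rightarrow> nat list" where "lcomp L1 L2 = map (\<lambda>m. L1 ! (m - 1)) L2"

definition K24 :: "(mat2 \<times> mat2) set" where "K24 = keyw ` set W24"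
definition EK :: "(mat2 \<times> mat2) set" where "EK = keyw ` set (filter (\<lambda>w. nrm w \<noteq> 2) W24)"

lemma T1: "\<forall>a\<in>K24. set (tbl a) = {1,2,3,4} \<and> distinct (tbl a) \<and> length (tbl a) = 4"
  unfolding K24_def by code_simp
lemma T2: "\<forall>a\<in>K24. \<forall>b\<in>K24. kmul a b \<in> K24 \<and> tbl (kmul a b) = lcomp (tbl a) (tbl b)"
  unfolding K24_def by code_simp
lemma T3: "\<forall>a\<in>K24. \<forall>b\<in>K24. tbl a = tbl b \<longrightarrow> a = b"
  unfolding K24_def by code_simp
lemma T4: "distinct (map keyw W24) \<and> length W24 = 24"
  by code_simp
lemma E1: "distinct (map keyw (filter (\<lambda>w. nrm w \<noteq> 2) W24)) \<and> length (filter (\<lambda>w. nrm w \<noteq> 2) W24) = 12"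
  by code_simp
lemma E2: "\<forall>w\<in>set W24. nrm w = 2 \<longrightarrow> keyw w \<notin> EK"
  unfolding EK_def by code_simp
lemma E3: "\<forall>a\<in>EK. \<exists>b\<in>K24. kmul b b = a"
  unfolding EK_def K24_def by code_simp


abbreviation "E1 \<equiv> ((1,0,0,1)::mat2)"

lemma cm_eq_dvd: "cm p A = cm p B \<longleftrightarrow> int p dvd e1 A - e1 B \<and> int p dvd e2 A - e2 B \<and> int p dvd e3 A - e3 B \<and> int p dvd e4 A - e4 B"
  by (simp add: mat_eq_iff mod_eq_dvd_iff)

definition Mq :: "mat2 \<Rightarrow> mat2 \<Rightarrow> mat2 \<Rightarrow> mat2 \<Rightarrow> mat2" where
  "Mq I J K x = madd (madd (smul (e1 x) E1) (smul (e2 x) I)) (madd (smul (e3 x) J) (smul (e4 x) K))"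

lemma Mq_mult:
  assumes r: "cm p (mm I I) = cm p (smul (-1) E1)" "cm p (mm J J) = cm p (smul (-1) E1)" "cm p (mm K K) = cm p (smul (-1) E1)"
   "cm p (mm I J) = cm p K" "cm p (mm J I) = cm p (smul (-1) K)"
   "cm p (mm J K) = cm p I" "cm p (mm K J) = cm p (smul (-1) I)"
   "cm p (mm K I) = cm p J" "cm p (mm I K) = cm p (smul (-1) J)"
  shows "cm p (mm (Mq I J K x) (Mq I J K y)) = cm p (Mq I J K (ham_mult x y))"
proof -
  obtain x1 x2 x3 x4 where x: "x = (x1,x2,x3,x4)" by (cases x) auto
  obtain y1 y2 y3 y4 where y: "y = (y1,y2,y3,y4)" by (cases y) auto
  define D where "D A B = madd (mm A B) (smul (-1) B)" for A B
  let ?m1 = "smul (-1) E1"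
  have dd: "int p dvd e (madd (mm A B) (smul (-1) C))" if "cm p (mm A B) = cm p C"
     and "e = e1 \<or> e = e2 \<or> e = e3 \<or> e = e4" for A B C e
    using that unfolding cm_eq_dvd by auto
  have eq: "e (mm (Mq I J K x) (Mq I J K y)) - e (Mq I J K (ham_mult x y)) =
      x2*y2 * e (madd (mm I I) (smul (-1) ?m1)) + x3*y3 * e (madd (mm J J) (smul (-1) ?m1))
    + x4*y4 * e (madd (mm K K) (smul (-1) ?m1))
    + x2*y3 * e (madd (mm I J) (smul (-1) K)) + x3*y2 * e (madd (mm J I) (smul (-1) (smul (-1) K)))
    + x3*y4 * e (madd (mm J K) (smul (-1) I)) + x4*y3 * e (madd (mm K J) (smul (-1) (smul (-1) I)))
    + x4*y2 * e (madd (mm K I) (smul (-1) J)) + x2*y4 * e (madd (mm I K) (smul (-1) (smul (-1) J)))"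
    if "e = e1 \<or> e = e2 \<or> e = e3 \<or> e = e4" for e
    using that by (auto simp: x y Mq_def ham_mult_def algebra_simps)
  have "int p dvd e (mm (Mq I J K x) (Mq I J K y)) - e (Mq I J K (ham_mult x y))"
    if e: "e = e1 \<or> e = e2 \<or> e = e3 \<or> e = e4" for e
    unfolding eq[OF e]
    by (intro dvd_add dvd_mult dd[OF _ e] r; simp)
  then show ?thesis unfolding cm_eq_dvd by blast
qed

definition rels :: "nat \<Rightarrow> mat2 \<Rightarrow> mat2 \<Rightarrow> mat2 \<Rightarrow> bool" where
  "rels p I J K \<longleftrightarrow> cm p (mm I I) = cm p (smul (-1) E1) \<and> cm p (mm J J) = cm p (smul (-1) E1) \<and> cm p (mm K K) = cm p (smul (-1) E1) \<and>
   cm p (mm I J) = cm p K \<and> cm p (mm J I) = cm p (smul (-1) K) \<and>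
   cm p (mm J K) = cm p I \<and> cm p (mm K J) = cm p (smul (-1) I) \<and>
   cm p (mm K I) = cm p J \<and> cm p (mm I K) = cm p (smul (-1) J)"

lemma Mq_mult': "rels p I J K \<Longrightarrow> cm p (mm (Mq I J K x) (Mq I J K y)) = cm p (Mq I J K (ham_mult x y))"
  unfolding rels_def using Mq_mult by blast

lemma Mq_smul: "Mq I J K (smul c x) = smul c (Mq I J K x)"
  by (simp add: Mq_def mat_eq_iff algebra_simps)
lemma Mq_scalar: "Mq I J K (c,0,0,0) = smul c E1"
  by (simp add: Mq_def mat_eq_iff)
lemma ham_cnj: "ham_mult x (cnj x) = (nrm x, 0, 0, 0)" "ham_mult (cnj x) x = (nrm x, 0, 0, 0)"
  by (cases x; simp add: ham_mult_def cnj_def nrm_def algebra_simps)+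
lemma mm_smul: "mm (smul c A) B = smul c (mm A B)" "mm A (smul c B) = smul c (mm A B)"
  by (simp_all add: mat_eq_iff algebra_simps)
lemma smul_smul: "smul c (smul d A) = smul (c*d) A" by (simp add: mat_eq_iff algebra_simps)
lemma mm_E1: "mm E1 A = A" "mm A E1 = A" by (simp_all add: mat_eq_iff)

definition tr :: "mat2 \<Rightarrow> int" where "tr A = e1 A + e4 A"
lemma cayley: "mm A A = madd (smul (tr A) A) (smul (- det0 A) E1)"
  by (simp add: mat_eq_iff tr_def det0_def algebra_simps)
lemma adj_eq: "adj A = madd (smul (tr A) E1) (smul (-1) A)"
  by (simp add: mat_eq_iff tr_def)
lemma adj_Mq: "adj (Mq I J K x) = Mq (adj I) (adj J) (adj K) x"
  by (simp add: mat_eq_iff Mq_def)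

lemma Mq_cong: "cm p I = cm p I' \<Longrightarrow> cm p J = cm p J' \<Longrightarrow> cm p K = cm p K' \<Longrightarrow> cm p (Mq I J K x) = cm p (Mq I' J' K' x)"
proof -
  assume a: "cm p I = cm p I'" "cm p J = cm p J'" "cm p K = cm p K'"
  have "int p dvd e (Mq I J K x) - e (Mq I' J' K' x)" if e: "e = e1 \<or> e = e2 \<or> e = e3 \<or> e = e4" for e
  proof -
    have "e (Mq I J K x) - e (Mq I' J' K' x) = e2 x * (e I - e I') + e3 x * (e J - e J') + e4 x * (e K - e K')"
      using e by (auto simp: Mq_def algebra_simps)
    moreover have "int p dvd e I - e I'" "int p dvd e J - e J'" "int p dvd e K - e K'"
      using a e unfolding cm_eq_dvd by auto
    ultimately show ?thesis by (simp add: dvd_add dvd_mult)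
  qed
  then show ?thesis unfolding cm_eq_dvd by blast
qed

lemma Mq_neg: "Mq (smul (-1) I) (smul (-1) J) (smul (-1) K) x = Mq I J K (cnj x)"
  by (simp add: Mq_def mat_eq_iff cnj_def)

lemma adj_tr0: "int p dvd tr A \<Longrightarrow> cm p (adj A) = cm p (smul (-1) A)"
  unfolding cm_eq_dvd by (simp add: tr_def add.commute)

lemma det_Mq:
  assumes "rels p I J K" "int p dvd tr I" "int p dvd tr J" "int p dvd tr K"
  shows "det0 (Mq I J K x) mod int p = nrm x mod int p"
proof -
  have "cm p (adj (Mq I J K x)) = cm p (Mq I J K (cnj x))"
    unfolding adj_Mq Mq_neg[symmetric] by (rule Mq_cong; rule adj_tr0; fact)
  then have "cm p (mm (Mq I J K x) (adj (Mq I J K x))) = cm p (mm (Mq I J K x) (Mq I J K (cnj x)))"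
    by (metis cm_mm_right)
  also have "\<dots> = cm p (smul (nrm x) E1)"
    using Mq_mult'[OF assms(1)] by (simp add: ham_cnj Mq_scalar)
  finally show ?thesis unfolding mm_adj by (metis e_cm(1) e_smul(1) e_simps(1) mult_1_right)
qed



lemma reduced_scalar:
  assumes "p > 0" "cm p X = X" "int p dvd e2 X" "int p dvd e3 X" "int p dvd e1 X - e4 X"
  shows "X = (e1 X, 0, 0, e1 X)"
proof -
  have b: "e1 X mod int p = e1 X" "e2 X mod int p = e2 X" "e3 X mod int p = e3 X" "e4 X mod int p = e4 X"
    using assms(2) by (metis e_cm)+
  have r: "0 \<le> x \<and> x < int p" if "x mod int p = x" for x
    using that assms(1) mod_self_iff[of "int p" x] by simp
  have z: "x = 0" if "int p dvd x" "0 \<le> x" "x < int p" for x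
  proof (rule ccontr)
    assume "x \<noteq> 0"
    then have "int p \<le> x" using that zdvd_imp_le by simp
    then show False using that by simp
  qed
  have "e2 X = 0" using z[of "e2 X"] r[OF b(2)] assms(3) by simp
  moreover have "e3 X = 0" using z[of "e3 X"] r[OF b(3)] assms(4) by simp
  moreover have "e1 X = e4 X"
  proof -
    have "e1 X mod int p = e4 X mod int p" using assms(5) by (simp add: mod_eq_dvd_iff)
    then show ?thesis using b by simp
  qed
  ultimately show ?thesis by (simp add: mat_eq_iff)
qed

locale qsetup =
  fixes p :: nat and H :: "mat2 set" and \<psi> :: "mat2 \<Rightarrow> mat2"
  assumes pr: "prime p" and p3: "p \<ge> 3" and sg: "subgroup H (GL2 p)"
    and isoH: "\<psi> \<in> iso ((GL2 p)\<lparr>carrier := H\<rparr>) quaternion_group"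
begin

abbreviation "G \<equiv> GL2 p"
abbreviation "HG \<equiv> (GL2 p)\<lparr>carrier := H\<rparr>"
definition \<phi> :: "mat2 \<Rightarrow> mat2" where "\<phi> = inv_into H \<psi>"

lemma p0: "p > 0" "p > 1" "int p > 1" using p3 by auto
lemma P: "prime (int p)" using pr by simp
lemma grp: "group G" using GL2_group[OF pr] .
interpretation G: group G by (rule grp)

lemma HsubG: "H \<subseteq> GL2_carrier p" using sg subgroup.subset by fastforce
lemma Hclosed: "x \<in> H \<Longrightarrow> y \<in> H \<Longrightarrow> mat2_mult p x y \<in> H"
  using sg subgroup.m_closed by fastforce
lemma carr_red: "x \<in> GL2_carrier p \<Longrightarrow> cm p x = x" using GL2_carrier_iff p0 by blast
lemma carr_det: "x \<in> GL2_carrier p \<Longrightarrow> \<not> int p dvd det0 x" using GL2_carrier_iff p0 by blast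

lemma psi_hom: "x \<in> H \<Longrightarrow> y \<in> H \<Longrightarrow> \<psi> (mat2_mult p x y) = ham_mult (\<psi> x) (\<psi> y)"
  using isoH by (simp add: iso_def hom_def quaternion_group_def)
lemma psi_bij: "bij_betw \<psi> H Q8"
  using isoH by (simp add: iso_def Q8_def)
lemma phi_bij: "bij_betw \<phi> Q8 H" unfolding \<phi>_def using psi_bij by (rule bij_betw_inv_into)
lemma phi_in: "q \<in> Q8 \<Longrightarrow> \<phi> q \<in> H" using phi_bij bij_betwE by blast
lemma phi_inG: "q \<in> Q8 \<Longrightarrow> \<phi> q \<in> GL2_carrier p" using phi_in HsubG by blast
lemma psi_in: "h \<in> H \<Longrightarrow> \<psi> h \<in> Q8" using psi_bij bij_betwE by blast
lemma psi_phi: "q \<in> Q8 \<Longrightarrow> \<psi> (\<phi> q) = q"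
  unfolding \<phi>_def using psi_bij by (simp add: bij_betw_def f_inv_into_f)
lemma phi_psi: "h \<in> H \<Longrightarrow> \<phi> (\<psi> h) = h"
  unfolding \<phi>_def using psi_bij by (simp add: bij_betw_def inv_into_f_f)
lemma phi_inj: "x \<in> Q8 \<Longrightarrow> y \<in> Q8 \<Longrightarrow> \<phi> x = \<phi> y \<Longrightarrow> x = y"
  by (metis psi_phi)
lemma H_eq: "H = \<phi> ` Q8" using phi_bij by (simp add: bij_betw_def)
lemma phi_hom: "x \<in> Q8 \<Longrightarrow> y \<in> Q8 \<Longrightarrow> \<phi> (ham_mult x y) = mat2_mult p (\<phi> x) (\<phi> y)"
proof -
  assume xy: "x \<in> Q8" "y \<in> Q8"
  have "ham_mult x y = \<psi> (mat2_mult p (\<phi> x) (\<phi> y))"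
    using xy by (simp add: psi_hom phi_in psi_phi)
  then show ?thesis using xy by (simp add: phi_psi Hclosed phi_in)
qed

lemma Q8_elems: "qone \<in> Q8" "qm \<in> Q8" "qi \<in> Q8" "qj \<in> Q8" "qk \<in> Q8"
  "(0,-1,0,0) \<in> Q8" "(0,0,-1,0) \<in> Q8" "(0,0,0,-1) \<in> Q8"
  by (simp_all add: Q8_set Q8l_def)

lemma phi_one: "\<phi> qone = E1"
proof -
  have "\<phi> qone = mat2_mult p (\<phi> qone) (\<phi> qone)"
    using phi_hom[OF Q8_elems(1) Q8_elems(1)] by (simp add: ham_mult_def)
  then have "\<phi> qone \<otimes>\<^bsub>G\<^esub> \<phi> qone = \<phi> qone" by simp
  then show ?thesis using G.l_cancel_one[of "\<phi> qone" "\<phi> qone"] phi_inG[OF Q8_elems(1)] by simp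
qed

definition "Z = \<phi> qm"
definition "I = \<phi> qi"
definition "J = \<phi> qj"
definition "K = \<phi> qk"

lemma hm: "x \<in> Q8 \<Longrightarrow> y \<in> Q8 \<Longrightarrow> mat2_mult p (\<phi> x) (\<phi> y) = \<phi> (ham_mult x y)"
  by (simp add: phi_hom)

lemma rels0:
  "mat2_mult p I Z = mat2_mult p Z I" "mat2_mult p J Z = mat2_mult p Z J"
  "mat2_mult p Z Z = E1" "mat2_mult p I J = K" "mat2_mult p J I = \<phi> (0,0,0,-1)"
  by (simp_all add: I_def J_def Z_def K_def hm Q8_elems ham_mult_def phi_one)

lemma K_ne: "K \<noteq> \<phi> (0,0,0,-1)"
  unfolding K_def using phi_inj Q8_elems by fastforce
lemma Z_ne: "Z \<noteq> E1"
  unfolding Z_def using phi_inj Q8_elems phi_one by fastforce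

lemma Z_scalar: "Z = (int p - 1, 0, 0, int p - 1)"
proof -
  have c1: "commutes p I Z" "commutes p J Z" "\<not> commutes p I J"
    using rels0 K_ne by (simp_all add: commutes_def mat2_mult_eq[symmetric])
  have ZG: "Z \<in> GL2_carrier p" unfolding Z_def by (rule phi_inG[OF Q8_elems(2)])
  have "int p dvd e2 Z \<and> int p dvd e3 Z \<and> int p dvd e1 Z - e4 Z"
    using commute_scalar[OF pr c1] .
  then have Zs: "Z = (e1 Z, 0, 0, e1 Z)" using reduced_scalar p0 carr_red[OF ZG] by blast
  define z where "z = e1 Z"
  have zm: "z mod int p = z" unfolding z_def using carr_red[OF ZG] by (metis e_cm(1))
  have zr: "0 \<le> z" "z < int p" using zm mod_self_iff[of "int p" z] p0 by auto
  have "mat2_mult p (z,0,0,z) (z,0,0,z) = E1" using rels0(3) Zs z_def by simp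
  then have "(z * z) mod int p = 1 mod int p" using p0 by (simp add: mat2_mult_def)
  then have "int p dvd z * z - 1" by (simp add: mod_eq_dvd_iff)
  then have "int p dvd (z - 1) * (z + 1)" by (simp add: algebra_simps)
  then have dj: "int p dvd z - 1 \<or> int p dvd z + 1" using P prime_dvd_multD by blast
  have "z \<noteq> 1" using Z_ne Zs z_def by auto
  from dj have "z = int p - 1"
  proof
    assume d: "int p dvd z - 1"
    have "z - 1 = 0"
    proof (rule ccontr)
      assume "z - 1 \<noteq> 0"
      then have "\<bar>int p\<bar> \<le> \<bar>z - 1\<bar>" using dvd_imp_le_int d by blast
      then show False using zr p3 by (simp add: abs_if split: if_splits)
    qed
    then show ?thesis using \<open>z \<noteq> 1\<close> by simp
  next
    assume d: "int p dvd z + 1"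
    have "0 < z + 1" "z + 1 \<le> int p" using zr by auto
    then have "z + 1 = int p" using d zdvd_imp_le by (metis antisym)
    then show ?thesis by simp
  qed
  then show ?thesis using Zs z_def by simp
qed

end


lemma scalar_commutes:
  assumes "int p dvd e2 A" "int p dvd e3 A" "int p dvd e1 A - e4 A"
  shows "commutes p A B"
  unfolding commutes_iff using assms by (simp add: dvd_diff dvd_mult2 dvd_mult)

lemma tr0:
  assumes pr: "prime p" and sq: "cm p (mm A A) = cm p (smul (-1) E1)" and nc: "\<not> commutes p A B"
  shows "int p dvd tr A"
proof (rule ccontr)
  assume nt: "\<not> int p dvd tr A"
  have P: "prime (int p)" using pr by simp
  have c: "cm p (madd (smul (tr A) A) (smul (- det0 A) E1)) = cm p (smul (-1) E1)"
    using sq cayley[of A] by simp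
  then have d: "int p dvd tr A * e2 A" "int p dvd tr A * e3 A"
      "int p dvd tr A * e1 A - det0 A + 1" "int p dvd tr A * e4 A - det0 A + 1"
    unfolding cm_eq_dvd by simp_all
  have "int p dvd (tr A * e1 A - det0 A + 1) - (tr A * e4 A - det0 A + 1)" using d(3,4) by (rule dvd_diff)
  moreover have "(tr A * e1 A - det0 A + 1) - (tr A * e4 A - det0 A + 1) = tr A * (e1 A - e4 A)"
    by (simp add: algebra_simps)
  ultimately have "int p dvd tr A * (e1 A - e4 A)" by simp
  then have "int p dvd e2 A" "int p dvd e3 A" "int p dvd e1 A - e4 A"
    using d nt P prime_dvd_multD by blast+
  then have "commutes p A B" by (rule scalar_commutes)
  then show False using nc by simp
qed

lemma hm_neg: "ham_mult qm x = smul (-1) x"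
  by (simp add: ham_mult_def smul_def prod.case_eq_if e1_def e2_def e3_def e4_def)

context qsetup begin

lemma minus1_mod: "(-1::int) mod int p = int p - 1"
  using p0 by (simp add: zmod_zminus1_eq_if)

lemma Zc: "Z = cm p (smul (-1) E1)"
  using Z_scalar minus1_mod by (simp add: cm_def smul_def)

lemma phi_neg: "x \<in> Q8 \<Longrightarrow> \<phi> (ham_mult qm x) = cm p (smul (-1) (\<phi> x))"
proof -
  assume x: "x \<in> Q8"
  have "\<phi> (ham_mult qm x) = mat2_mult p Z (\<phi> x)" using x by (simp add: hm Z_def Q8_elems)
  also have "\<dots> = cm p (smul (-1) (\<phi> x))" unfolding mat2_mult_eq Zc by (simp add: mm_smul mm_E1)
  finally show ?thesis .
qed

lemma IJK_in: "I \<in> GL2_carrier p" "J \<in> GL2_carrier p" "K \<in> GL2_carrier p" "Z \<in> GL2_carrier p"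
  by (simp_all add: I_def J_def K_def Z_def phi_inG Q8_elems)

lemma mmr: "x \<in> Q8 \<Longrightarrow> y \<in> Q8 \<Longrightarrow> cm p (mm (\<phi> x) (\<phi> y)) = \<phi> (ham_mult x y)"
  by (simp add: hm mat2_mult_eq[symmetric])

lemma negq: "(0,0,0,-1) = ham_mult qm qk" "(0,-1,0,0) = ham_mult qm qi" "(0,0,-1,0) = ham_mult qm qj"
  by (simp_all add: ham_mult_def)

lemma relsIJK: "rels p I J K"
proof -
  have red: "cm p I = I" "cm p J = J" "cm p K = K" using IJK_in carr_red by blast+
  show ?thesis unfolding rels_def I_def J_def K_def
    using Q8_elems red[unfolded I_def J_def K_def]
    by (simp add: mmr ham_mult_def Zc[unfolded Z_def] phi_neg[symmetric] negq[symmetric])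
qed

lemma noncomm: "\<not> commutes p I J" "\<not> commutes p J I" "\<not> commutes p K I"
proof -
  have k: "mat2_mult p I J \<noteq> mat2_mult p J I" using rels0 K_ne by simp
  then show "\<not> commutes p I J" "\<not> commutes p J I" by (auto simp: commutes_def mat2_mult_eq)
  have "mat2_mult p K I = \<phi> qj" "mat2_mult p I K = \<phi> (0,0,-1,0)"
    by (simp_all add: I_def K_def hm Q8_elems ham_mult_def)
  moreover have "\<phi> qj \<noteq> \<phi> (0,0,-1,0)" using phi_inj Q8_elems by fastforce
  ultimately show "\<not> commutes p K I" by (auto simp: commutes_def mat2_mult_eq)
qed

lemma traces: "int p dvd tr I" "int p dvd tr J" "int p dvd tr K"
  using relsIJK noncomm tr0[OF pr] unfolding rels_def by blast+

abbreviation "MQ \<equiv> Mq I J K"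

lemma phi_Mq: "q \<in> Q8 \<Longrightarrow> \<phi> q = cm p (MQ q)"
proof -
  assume q: "q \<in> Q8"
  have red: "cm p I = I" "cm p J = J" "cm p K = K" using IJK_in carr_red by blast+
  have e: "cm p E1 = E1" using p0 by (simp add: cm_def)
  have m: "MQ (ham_mult qm x) = smul (-1) (MQ x)" for x
    by (simp add: Mq_smul hm_neg)
  have b1: "\<phi> qone = cm p (MQ qone)" using e by (simp add: phi_one Mq_def madd_def smul_def mat_split[symmetric])
  have b2: "\<phi> qi = cm p (MQ qi)" using red by (simp add: I_def[symmetric] Mq_def madd_def smul_def mat_split[symmetric])
  have b3: "\<phi> qj = cm p (MQ qj)" using red by (simp add: J_def[symmetric] Mq_def madd_def smul_def mat_split[symmetric])
  have b4: "\<phi> qk = cm p (MQ qk)" using red by (simp add: K_def[symmetric] Mq_def madd_def smul_def mat_split[symmetric])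
  have n: "\<phi> (ham_mult qm x) = cm p (MQ (ham_mult qm x))" if "x \<in> Q8" "\<phi> x = cm p (MQ x)" for x
    using that by (simp add: phi_neg m)
  have qmq: "qm = ham_mult qm qone" by (simp add: ham_mult_def)
  have "q = qone \<or> q = ham_mult qm qone \<or> q = qi \<or> q = ham_mult qm qi \<or> q = qj \<or> q = ham_mult qm qj \<or> q = qk \<or> q = ham_mult qm qk"
    using q by (simp add: Q8_set Q8l_def ham_mult_def)
  then show ?thesis
    using b1 b2 b3 b4 n[OF _ b1] n[OF _ b2] n[OF _ b3] n[OF _ b4] Q8_elems by auto
qed

end


lemma rot_surj: "\<forall>w\<in>set W24. \<forall>q\<in>Q8. \<exists>q'\<in>Q8. rot w q' = q"
  unfolding Q8_set by code_simp

lemma nrm_cases: "w \<in> set W24 \<Longrightarrow> nrm w = 1 \<or> nrm w = 2 \<or> nrm w = 4"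
  using C5 by blast

lemma cm_smul_mm_left[simp]: "cm p (smul c (mm (cm p A) B)) = cm p (smul c (mm A B))"
  by (metis cm_smul cm_mm_left)

context qsetup begin

interpretation G: group G by (rule grp)

lemma norm_iff: "g \<in> normalizer G H \<longleftrightarrow> g \<in> carrier G \<and> (\<lambda>h. g \<otimes>\<^bsub>G\<^esub> h \<otimes>\<^bsub>G\<^esub> inv\<^bsub>G\<^esub> g) ` H = H"
proof -
  have "g <#\<^bsub>G\<^esub> H #>\<^bsub>G\<^esub> inv\<^bsub>G\<^esub> g = (\<lambda>h. g \<otimes>\<^bsub>G\<^esub> h \<otimes>\<^bsub>G\<^esub> inv\<^bsub>G\<^esub> g) ` H" for g
    unfolding l_coset_def r_coset_def by auto
  then show ?thesis using HsubG unfolding normalizer_def stabilizer_def by auto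
qed

lemma nrm_ndvd: "w \<in> set W24 \<Longrightarrow> \<not> int p dvd nrm w"
proof
  assume w: "w \<in> set W24" and d: "int p dvd nrm w"
  have "int p dvd 2"
  proof -
    consider "nrm w = 1" | "nrm w = 2" | "nrm w = 4" using nrm_cases[OF w] by blast
    then show ?thesis
    proof cases
      case 1 then show ?thesis using d p0 by simp
    next
      case 2 then show ?thesis using d by simp
    next
      case 3
      then have "int p dvd 2 * 2" using d by simp
      then show ?thesis using P prime_dvd_multD by blast
    qed
  qed
  then have "int p \<le> 2" using zdvd_imp_le[of "int p" 2] by simp
  then show False using p3 by simp
qed

definition XW :: "mat2 \<Rightarrow> mat2" where "XW w = cm p (MQ w)"

lemma det_XW: "det0 (XW w) mod int p = nrm w mod int p"
  unfolding XW_def det0_cm_mod using det_Mq[OF relsIJK traces] .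

lemma XW_in: "w \<in> set W24 \<Longrightarrow> XW w \<in> carrier G"
  using det_XW[of w] nrm_ndvd[of w] p0 by (simp add: GL2_carrier_iff XW_def dvd_eq_mod_eq_0 cm_mod_dvd[symmetric])

lemma cm_unit: "[c * n = 1] (mod int p) \<Longrightarrow> cm p (smul (c * n) A) = cm p A"
  unfolding cm_eq_dvd e_smul
proof -
  assume c: "[c * n = 1] (mod int p)"
  have "int p dvd c * n * x - x" for x
  proof -
    have "[c * n * x = 1 * x] (mod int p)" using c by (rule cong_scalar_right)
    then show ?thesis by (simp add: cong_iff_dvd_diff)
  qed
  then show "int p dvd c * n * e1 A - e1 A \<and> int p dvd c * n * e2 A - e2 A \<and>
    int p dvd c * n * e3 A - e3 A \<and> int p dvd c * n * e4 A - e4 A" by blast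
qed

lemma XW_inv:
  assumes w: "w \<in> set W24" and c: "[c * nrm w = 1] (mod int p)"
  shows "inv\<^bsub>G\<^esub> (XW w) = cm p (smul c (MQ (cnj w)))"
proof (rule G.inv_equality)
  have "mat2_mult p (cm p (smul c (MQ (cnj w)))) (XW w) = cm p (smul c (mm (MQ (cnj w)) (MQ w)))"
    by (simp add: XW_def mat2_mult_eq mm_smul)
  also have "\<dots> = cm p (smul c (cm p (mm (MQ (cnj w)) (MQ w))))" by simp
  also have "\<dots> = cm p (smul c (smul (nrm w) E1))"
    using Mq_mult'[OF relsIJK] by (simp add: ham_cnj Mq_scalar)
  also have "\<dots> = E1" using cm_unit[OF c, of E1] p0 by (simp add: smul_smul cm_def)
  finally show "cm p (smul c (MQ (cnj w))) \<otimes>\<^bsub>G\<^esub> XW w = \<one>\<^bsub>G\<^esub>" by simp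
  show "XW w \<in> carrier G" using XW_in[OF w] .
  have "\<not> int p dvd c"
  proof
    assume "int p dvd c"
    then have "int p dvd c * nrm w" by simp
    then have "int p dvd 1" using c by (simp add: cong_dvd_iff)
    then show False using p0 by simp
  qed
  then have "\<not> int p dvd c * c * nrm w" using nrm_ndvd[OF w] P by (metis prime_dvd_multD)
  moreover have "det0 (smul c (MQ (cnj w))) mod int p = (c * c * nrm w) mod int p"
  proof -
    have "det0 (smul c (MQ (cnj w))) = c * c * det0 (MQ (cnj w))" by (simp add: det0_def algebra_simps)
    moreover have "nrm (cnj w) = nrm w" by (simp add: nrm_def cnj_def)
    ultimately show ?thesis using det_Mq[OF relsIJK traces, of "cnj w"]
      by (metis mod_mult_right_eq)
  qed
  ultimately show "cm p (smul c (MQ (cnj w))) \<in> carrier G"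
    using p0 by (simp add: GL2_carrier_iff cm_mod_dvd dvd_eq_mod_eq_0 det0_cm_mod)
qed

lemma conj_XW:
  assumes w: "w \<in> set W24" and q: "q \<in> Q8"
  shows "XW w \<otimes>\<^bsub>G\<^esub> \<phi> q \<otimes>\<^bsub>G\<^esub> inv\<^bsub>G\<^esub> (XW w) = \<phi> (rot w q)"
proof -
  obtain c where c: "[nrm w * c = 1] (mod int p)" using inv_mod_exists[OF P nrm_ndvd[OF w]] by blast
  then have c': "[c * nrm w = 1] (mod int p)" by (simp add: mult.commute)
  have r: "ham_mult (ham_mult w q) (cnj w) = smul (nrm w) (rot w q)" "rot w q \<in> Q8" using C4 w q by blast+
  have inner: "cm p (mm (mm (MQ w) (MQ q)) (MQ (cnj w))) = cm p (smul (nrm w) (MQ (rot w q)))"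
  proof -
    have "cm p (mm (mm (MQ w) (MQ q)) (MQ (cnj w))) = cm p (mm (cm p (mm (MQ w) (MQ q))) (MQ (cnj w)))" by simp
    also have "\<dots> = cm p (mm (MQ (ham_mult w q)) (MQ (cnj w)))"
      using Mq_mult'[OF relsIJK] by (metis cm_mm_left)
    also have "\<dots> = cm p (MQ (ham_mult (ham_mult w q) (cnj w)))" using Mq_mult'[OF relsIJK] by blast
    finally show ?thesis by (simp add: r Mq_smul)
  qed
  have "XW w \<otimes>\<^bsub>G\<^esub> \<phi> q \<otimes>\<^bsub>G\<^esub> inv\<^bsub>G\<^esub> (XW w) = cm p (smul c (mm (mm (MQ w) (MQ q)) (MQ (cnj w))))"
    unfolding XW_inv[OF w c'] by (simp add: XW_def phi_Mq[OF q] mat2_mult_eq mm_smul)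
  also have "\<dots> = cm p (smul c (cm p (mm (mm (MQ w) (MQ q)) (MQ (cnj w)))))" by simp
  also have "\<dots> = cm p (smul c (cm p (smul (nrm w) (MQ (rot w q)))))" by (simp only: inner)
  also have "\<dots> = cm p (MQ (rot w q))" using cm_unit[OF c'] by (simp add: smul_smul)
  also have "\<dots> = \<phi> (rot w q)" using phi_Mq[OF r(2)] by simp
  finally show ?thesis .
qed

lemma XW_norm: "w \<in> set W24 \<Longrightarrow> XW w \<in> normalizer G H"
proof -
  assume w: "w \<in> set W24"
  have "(\<lambda>h. XW w \<otimes>\<^bsub>G\<^esub> h \<otimes>\<^bsub>G\<^esub> inv\<^bsub>G\<^esub> (XW w)) ` H = H"
  proof
    show "(\<lambda>h. XW w \<otimes>\<^bsub>G\<^esub> h \<otimes>\<^bsub>G\<^esub> inv\<^bsub>G\<^esub> (XW w)) ` H \<subseteq> H"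
    proof
      fix x assume "x \<in> (\<lambda>h. XW w \<otimes>\<^bsub>G\<^esub> h \<otimes>\<^bsub>G\<^esub> inv\<^bsub>G\<^esub> (XW w)) ` H"
      then obtain h where h: "h \<in> H" "x = XW w \<otimes>\<^bsub>G\<^esub> h \<otimes>\<^bsub>G\<^esub> inv\<^bsub>G\<^esub> (XW w)" by blast
      have "x = \<phi> (rot w (\<psi> h))" using h conj_XW[OF w psi_in[OF h(1)]] phi_psi[OF h(1)] by simp
      then show "x \<in> H" using C4 w psi_in[OF h(1)] phi_in by blast
    qed
    show "H \<subseteq> (\<lambda>h. XW w \<otimes>\<^bsub>G\<^esub> h \<otimes>\<^bsub>G\<^esub> inv\<^bsub>G\<^esub> (XW w)) ` H"
    proof
      fix h assume "h \<in> H"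
      then obtain q where q: "q \<in> Q8" "h = \<phi> q" using psi_in phi_psi by metis
      then obtain q' where q': "q' \<in> Q8" "rot w q' = q" using rot_surj w by blast
      then have "h = XW w \<otimes>\<^bsub>G\<^esub> \<phi> q' \<otimes>\<^bsub>G\<^esub> inv\<^bsub>G\<^esub> (XW w)" using conj_XW[OF w q'(1)] q by simp
      then show "h \<in> (\<lambda>h. XW w \<otimes>\<^bsub>G\<^esub> h \<otimes>\<^bsub>G\<^esub> inv\<^bsub>G\<^esub> (XW w)) ` H" using q'(1) phi_in by blast
    qed
  qed
  then show ?thesis using norm_iff XW_in[OF w] by blast
qed

end


lemma (in group) inv_cancel_aux: "x \<in> carrier G \<Longrightarrow> y \<in> carrier G \<Longrightarrow> inv x \<otimes> (x \<otimes> y) = y"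
  by (simp add: m_assoc[symmetric])

context qsetup begin

interpretation G: group G by (rule grp)

abbreviation "N \<equiv> normalizer G H"
abbreviation "NG \<equiv> G\<lparr>carrier := N\<rparr>"
abbreviation "A \<equiv> AutoGroup HG"
abbreviation "cj \<equiv> conj_aut G H"

lemma HG_simps[simp]: "carrier HG = H" "monoid.mult HG = mat2_mult p" by simp_all

lemma hgrp: "group HG" using G.subgroup_imp_group[OF sg] .
lemma E1_H: "E1 \<in> H" using sg subgroup.one_closed by fastforce
lemma H_G: "h \<in> H \<Longrightarrow> h \<in> carrier G" using HsubG by auto

lemma N_G: "g \<in> N \<Longrightarrow> g \<in> carrier G" using norm_iff by blast
lemma N_conj: "g \<in> N \<Longrightarrow> h \<in> H \<Longrightarrow> g \<otimes>\<^bsub>G\<^esub> h \<otimes>\<^bsub>G\<^esub> inv\<^bsub>G\<^esub> g \<in> H"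
  using norm_iff by blast
lemma N_img: "g \<in> N \<Longrightarrow> (\<lambda>h. g \<otimes>\<^bsub>G\<^esub> h \<otimes>\<^bsub>G\<^esub> inv\<^bsub>G\<^esub> g) ` H = H"
  using norm_iff by blast

lemma cj_app: "h \<in> H \<Longrightarrow> cj g h = g \<otimes>\<^bsub>G\<^esub> h \<otimes>\<^bsub>G\<^esub> inv\<^bsub>G\<^esub> g"
  by (simp add: conj_aut_def)

lemma cj_auto: assumes g: "g \<in> N" shows "cj g \<in> auto HG"
proof -
  have gG: "g \<in> carrier G" using N_G[OF g] .
  have hom: "cj g \<in> hom HG HG"
  proof (rule homI)
    fix x assume "x \<in> carrier HG" then show "cj g x \<in> carrier HG" using N_conj[OF g] by (simp add: cj_app)
  next
    fix x y assume x: "x \<in> carrier HG" and y: "y \<in> carrier HG"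
    then have xG: "x \<in> carrier G" "y \<in> carrier G" using H_G by auto
    have "cj g (x \<otimes>\<^bsub>HG\<^esub> y) = g \<otimes>\<^bsub>G\<^esub> (x \<otimes>\<^bsub>G\<^esub> y) \<otimes>\<^bsub>G\<^esub> inv\<^bsub>G\<^esub> g"
      using x y Hclosed by (simp add: cj_app)
    also have "\<dots> = (g \<otimes>\<^bsub>G\<^esub> x \<otimes>\<^bsub>G\<^esub> inv\<^bsub>G\<^esub> g) \<otimes>\<^bsub>G\<^esub> (g \<otimes>\<^bsub>G\<^esub> y \<otimes>\<^bsub>G\<^esub> inv\<^bsub>G\<^esub> g)"
      using xG gG by (simp del: GL2_simps add: G.m_assoc G.inv_cancel_aux)
    finally show "cj g (x \<otimes>\<^bsub>HG\<^esub> y) = cj g x \<otimes>\<^bsub>HG\<^esub> cj g y" using x y by (simp add: cj_app)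
  qed
  have "inj_on (cj g) H"
  proof
    fix x y assume x: "x \<in> H" and y: "y \<in> H" and e: "cj g x = cj g y"
    then have "g \<otimes>\<^bsub>G\<^esub> x \<otimes>\<^bsub>G\<^esub> inv\<^bsub>G\<^esub> g = g \<otimes>\<^bsub>G\<^esub> y \<otimes>\<^bsub>G\<^esub> inv\<^bsub>G\<^esub> g" by (simp add: cj_app)
    then show "x = y" using x y gG H_G by (simp del: GL2_simps) 
  qed
  moreover have "cj g ` H = H" using N_img[OF g] by (auto simp: cj_app image_def)
  ultimately have "cj g \<in> Bij H" by (simp add: Bij_def bij_betw_def conj_aut_def)
  then show ?thesis using hom by (simp add: auto_def)
qed

lemma A_simps[simp]: "carrier A = auto HG" "\<one>\<^bsub>A\<^esub> = (\<lambda>x\<in>H. x)"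
  by (simp_all add: AutoGroup_def BijGroup_def)

lemma auto_Bij: "\<alpha> \<in> auto HG \<Longrightarrow> \<alpha> \<in> Bij H" by (simp add: auto_def)

lemma A_mult: "\<alpha> \<in> auto HG \<Longrightarrow> \<beta> \<in> auto HG \<Longrightarrow> \<alpha> \<otimes>\<^bsub>A\<^esub> \<beta> = compose H \<alpha> \<beta>"
  by (simp add: AutoGroup_def BijGroup_def auto_Bij)

lemma cj_mult: assumes "g \<in> N" "g' \<in> N" shows "cj (g \<otimes>\<^bsub>G\<^esub> g') = compose H (cj g) (cj g')"
proof
  fix h
  show "cj (g \<otimes>\<^bsub>G\<^esub> g') h = compose H (cj g) (cj g') h"
  proof (cases "h \<in> H")
    case True
    have gG: "g \<in> carrier G" "g' \<in> carrier G" using N_G assms by auto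
    have "cj (g \<otimes>\<^bsub>G\<^esub> g') h = g \<otimes>\<^bsub>G\<^esub> (g' \<otimes>\<^bsub>G\<^esub> h \<otimes>\<^bsub>G\<^esub> inv\<^bsub>G\<^esub> g') \<otimes>\<^bsub>G\<^esub> inv\<^bsub>G\<^esub> g"
      using True gG H_G by (simp del: GL2_simps add: cj_app G.inv_mult_group G.m_assoc)
    then show ?thesis using True N_conj[OF assms(2) True] by (simp add: compose_def cj_app)
  next
    case False then show ?thesis by (simp add: conj_aut_def compose_def)
  qed
qed

lemma N_sub: "subgroup N G" using G.normalizer_imp_subgroup HsubG by simp

lemma cj_hom: "cj \<in> hom NG A"
proof (rule homI)
  fix g assume "g \<in> carrier NG" then show "cj g \<in> carrier A" using cj_auto by simp
next
  fix g g' assume g: "g \<in> carrier NG" "g' \<in> carrier NG"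
  then show "cj (g \<otimes>\<^bsub>NG\<^esub> g') = cj g \<otimes>\<^bsub>A\<^esub> cj g'"
    using cj_mult cj_auto A_mult by simp
qed

end


context qsetup begin

interpretation G: group G by (rule grp)

definition keyA :: "(mat2 \<Rightarrow> mat2) \<Rightarrow> mat2 \<times> mat2" where "keyA \<alpha> = (\<psi> (\<alpha> I), \<psi> (\<alpha> J))"

lemma IJ_H: "I \<in> H" "J \<in> H" "K \<in> H" "Z \<in> H"
  by (simp_all add: I_def J_def K_def Z_def phi_in Q8_elems)

context
  fixes \<alpha> assumes al: "\<alpha> \<in> auto HG"
begin

lemma al_in: "x \<in> H \<Longrightarrow> \<alpha> x \<in> H"
  using al by (auto simp: auto_def hom_def)
lemma al_hom: "x \<in> H \<Longrightarrow> y \<in> H \<Longrightarrow> \<alpha> (mat2_mult p x y) = mat2_mult p (\<alpha> x) (\<alpha> y)"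
  using al by (auto simp: auto_def hom_def)
lemma al_inj: "inj_on \<alpha> H" using al by (simp add: auto_def Bij_def bij_betw_def)
lemma al_ext: "\<alpha> \<in> extensional H" using al by (simp add: auto_def Bij_def)

lemma al_E1: "\<alpha> E1 = E1"
proof -
  have e: "mat2_mult p E1 E1 = E1" using G.l_one[of E1] G.one_closed by simp
  have "\<alpha> E1 \<otimes>\<^bsub>G\<^esub> \<alpha> E1 = \<alpha> E1" using al_hom[OF E1_H E1_H] e by simp
  moreover have "\<alpha> E1 \<in> carrier G" using al_in[OF E1_H] H_G by blast
  ultimately show ?thesis using G.l_cancel_one[of "\<alpha> E1" "\<alpha> E1"] by simp
qed

lemma psi_E1: "\<psi> E1 = qone" using psi_phi[OF Q8_elems(1)] phi_one by simp

lemma al_Z: "\<alpha> Z = Z"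
proof -
  define x where "x = \<alpha> Z"
  have xH: "x \<in> H" using al_in IJ_H x_def by blast
  have xx: "mat2_mult p x x = E1" using al_hom[OF IJ_H(4) IJ_H(4)] rels0(3) al_E1 x_def by simp
  have "x \<noteq> E1" using al_inj Z_ne al_E1 IJ_H(4) E1_H x_def by (metis inj_on_eq_iff)
  have "ham_mult (\<psi> x) (\<psi> x) = qone" using psi_hom[OF xH xH] xx psi_E1 by simp
  then have "\<psi> x = qone \<or> \<psi> x = qm" using C2 psi_in[OF xH] by blast
  moreover have "\<psi> x \<noteq> qone" using phi_psi[OF xH] phi_one \<open>x \<noteq> E1\<close> by force
  ultimately have "\<psi> x = qm" by blast
  then show ?thesis using phi_psi[OF xH] Z_def x_def by simp
qed

definition "u = \<psi> (\<alpha> I)"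
definition "v = \<psi> (\<alpha> J)"
lemma uv_Q8: "u \<in> Q8" "v \<in> Q8" using psi_in al_in IJ_H u_def v_def by auto
lemma phi_u: "\<phi> u = \<alpha> I" "\<phi> v = \<alpha> J" using phi_psi al_in IJ_H u_def v_def by auto

lemma al_neg: "x \<in> Q8 \<Longrightarrow> y \<in> Q8 \<Longrightarrow> \<alpha> (\<phi> x) = \<phi> y \<Longrightarrow> \<alpha> (\<phi> (ham_mult qm x)) = \<phi> (ham_mult qm y)"
proof -
  assume xy: "x \<in> Q8" "y \<in> Q8" "\<alpha> (\<phi> x) = \<phi> y"
  have "\<phi> (ham_mult qm x) = mat2_mult p Z (\<phi> x)" using xy Q8_elems by (simp add: hm Z_def)
  then have "\<alpha> (\<phi> (ham_mult qm x)) = mat2_mult p (\<alpha> Z) (\<phi> y)"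
    using al_hom[OF IJ_H(4) phi_in[OF xy(1)]] xy by simp
  then show ?thesis using al_Z xy Q8_elems by (simp add: hm Z_def)
qed

lemma al_phi: "q \<in> Q8 \<Longrightarrow> \<alpha> (\<phi> q) = \<phi> (app u v q)"
proof -
  assume q: "q \<in> Q8"
  have a1: "\<alpha> (\<phi> qone) = \<phi> qone" using al_E1 phi_one by simp
  have a2: "\<alpha> (\<phi> qm) = \<phi> qm" using al_Z Z_def by simp
  have a3: "\<alpha> (\<phi> qi) = \<phi> u" using phi_u I_def by simp
  have a4: "\<alpha> (\<phi> qj) = \<phi> v" using phi_u J_def by simp
  have a5: "\<alpha> (\<phi> qk) = \<phi> (ham_mult u v)"
  proof -
    have "\<phi> qk = mat2_mult p I J" using rels0(4) K_def by simp
    then have "\<alpha> (\<phi> qk) = mat2_mult p (\<phi> u) (\<phi> v)" using al_hom[OF IJ_H(1,2)] phi_u by simp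
    then show ?thesis using uv_Q8 by (simp add: hm)
  qed
  have uvk: "ham_mult u v \<in> Q8" using C1 uv_Q8 by blast
  have "q = qone \<or> q = qm \<or> q = qi \<or> q = ham_mult qm qi \<or> q = qj \<or> q = ham_mult qm qj \<or> q = qk \<or> q = ham_mult qm qk"
    using q by (simp add: Q8_set Q8l_def ham_mult_def)
  then show ?thesis
    using a1 a2 a3 a4 a5 al_neg[OF _ _ a3] al_neg[OF _ _ a4] al_neg[OF _ _ a5] Q8_elems uv_Q8 uvk
    by (auto simp: app_def ham_mult_def)
qed

lemma key_K24: "keyA \<alpha> \<in> K24"
proof -
  have uu: "ham_mult u u = qm"
  proof -
    have "\<phi> (ham_mult u u) = mat2_mult p (\<alpha> I) (\<alpha> I)" using uv_Q8 phi_u by (simp add: hm[symmetric])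
    also have "\<dots> = \<alpha> (mat2_mult p I I)" using al_hom IJ_H by simp
    also have "\<dots> = \<phi> qm" using al_Z Q8_elems by (simp add: I_def Z_def hm ham_mult_def)
    finally show ?thesis using phi_inj C1 uv_Q8 Q8_elems by blast
  qed
  have vv: "ham_mult v v = qm"
  proof -
    have "\<phi> (ham_mult v v) = mat2_mult p (\<alpha> J) (\<alpha> J)" using uv_Q8 phi_u by (simp add: hm[symmetric])
    also have "\<dots> = \<alpha> (mat2_mult p J J)" using al_hom IJ_H by simp
    also have "\<dots> = \<phi> qm" using al_Z Q8_elems by (simp add: J_def Z_def hm ham_mult_def)
    finally show ?thesis using phi_inj C1 uv_Q8 Q8_elems by blast
  qed
  have vu: "v \<noteq> u"
  proof
    assume "v = u"
    then have "\<alpha> J = \<alpha> I" using phi_u by metis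
    then have "J = I" using inj_onD[OF al_inj] IJ_H by blast
    then have "qj = qi" using phi_inj[OF Q8_elems(4) Q8_elems(3)] I_def J_def by simp
    then show False by simp
  qed
  have vmu: "v \<noteq> ham_mult qm u"
  proof
    assume e: "v = ham_mult qm u"
    have "\<alpha> (\<phi> (ham_mult qm qi)) = \<phi> (ham_mult qm u)" using al_neg[OF Q8_elems(3) uv_Q8(1)] phi_u I_def by simp
    then have "\<alpha> (\<phi> qj) = \<alpha> (\<phi> (ham_mult qm qi))" using e phi_u J_def by simp
    moreover have hq: "ham_mult qm qi = (0,-1,0,0)" by (simp add: ham_mult_def)
    ultimately have "\<phi> qj = \<phi> (0,-1,0,0)" using inj_onD[OF al_inj] phi_in Q8_elems by simp
    then have "qj = (0,-1,0,0)" using phi_inj[OF Q8_elems(4) Q8_elems(6)] by simp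
    then show False by simp
  qed
  show ?thesis using C3 uv_Q8 uu vv vu vmu by (simp add: keyA_def K24_def u_def v_def)
qed

end

lemma key_app: "\<alpha> \<in> auto HG \<Longrightarrow> q \<in> Q8 \<Longrightarrow> \<alpha> (\<phi> q) = \<phi> (app (fst (keyA \<alpha>)) (snd (keyA \<alpha>)) q)"
  using al_phi by (simp add: keyA_def u_def v_def)

lemma key_inj: assumes "\<alpha> \<in> auto HG" "\<beta> \<in> auto HG" "keyA \<alpha> = keyA \<beta>" shows "\<alpha> = \<beta>"
proof (rule extensionalityI[OF al_ext[OF assms(1)] al_ext[OF assms(2)]])
  fix h assume h: "h \<in> H"
  then have "h = \<phi> (\<psi> h)" "\<psi> h \<in> Q8" using phi_psi psi_in by auto
  then show "\<alpha> h = \<beta> h" using key_app[OF assms(1)] key_app[OF assms(2)] assms(3) by metis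
qed

lemma app_Q8: "a \<in> Q8 \<Longrightarrow> b \<in> Q8 \<Longrightarrow> q \<in> Q8 \<Longrightarrow> app a b q \<in> Q8"
  using C1 Q8_elems by (simp add: app_def)

lemma key_Q8: "\<alpha> \<in> auto HG \<Longrightarrow> fst (keyA \<alpha>) \<in> Q8 \<and> snd (keyA \<alpha>) \<in> Q8"
  using uv_Q8 by (simp add: keyA_def u_def v_def)

lemma key_mult: assumes "\<alpha> \<in> auto HG" "\<beta> \<in> auto HG"
  shows "keyA (compose H \<alpha> \<beta>) = kmul (keyA \<alpha>) (keyA \<beta>)"
proof -
  have b: "\<beta> I = \<phi> (fst (keyA \<beta>))" "\<beta> J = \<phi> (snd (keyA \<beta>))"
    using phi_psi al_in[OF assms(2)] IJ_H by (auto simp: keyA_def)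
  have "compose H \<alpha> \<beta> I = \<phi> (app (fst (keyA \<alpha>)) (snd (keyA \<alpha>)) (fst (keyA \<beta>)))"
    "compose H \<alpha> \<beta> J = \<phi> (app (fst (keyA \<alpha>)) (snd (keyA \<alpha>)) (snd (keyA \<beta>)))"
    using IJ_H b key_app[OF assms(1)] key_Q8[OF assms(2)] by (auto simp: compose_def)
  then show ?thesis using psi_phi app_Q8 key_Q8[OF assms(1)] key_Q8[OF assms(2)]
    by (simp add: keyA_def kmul_def)
qed

lemma key_cj: assumes w: "w \<in> set W24" shows "keyA (cj (XW w)) = keyw w"
proof -
  have "cj (XW w) I = \<phi> (rot w qi)" "cj (XW w) J = \<phi> (rot w qj)"
    using conj_XW[OF w] Q8_elems IJ_H by (simp_all add: cj_app I_def J_def)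
  then show ?thesis using psi_phi C4 w Q8_elems by (simp add: keyA_def keyw_def)
qed

end


lemma (in group) conj_eq_comm:
  assumes "x \<in> carrier G" "g \<in> carrier G" "h \<in> carrier G" "g \<otimes> h \<otimes> inv g = x \<otimes> h \<otimes> inv x"
  shows "(inv x \<otimes> g) \<otimes> h = h \<otimes> (inv x \<otimes> g)"
proof -
  have "(inv x \<otimes> g) \<otimes> h = inv x \<otimes> (g \<otimes> h \<otimes> inv g) \<otimes> g" using assms(1-3) by (simp add: m_assoc)
  also have "\<dots> = inv x \<otimes> (x \<otimes> h \<otimes> inv x) \<otimes> g" using assms(4) by simp
  also have "\<dots> = h \<otimes> (inv x \<otimes> g)" using assms(1-3) by (simp add: m_assoc inv_cancel_aux)
  finally show ?thesis .
qed

lemma (in group) comm_conj: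
  assumes "g \<in> carrier G" "h \<in> carrier G" "g \<otimes> h = h \<otimes> g"
  shows "g \<otimes> h \<otimes> inv g = h"
  using assms by (simp add: m_assoc)

lemma (in group) conj_comm:
  assumes "g \<in> carrier G" "h \<in> carrier G" "g \<otimes> h \<otimes> inv g = h"
  shows "g \<otimes> h = h \<otimes> g"
proof -
  have "g \<otimes> h = g \<otimes> h \<otimes> inv g \<otimes> g" using assms(1,2) by (simp add: m_assoc)
  then show ?thesis using assms(3) by simp
qed

context qsetup begin

interpretation G: group G by (rule grp)

lemma cj_surj_w: "\<alpha> \<in> auto HG \<Longrightarrow> \<exists>w\<in>set W24. \<alpha> = cj (XW w)"
proof -
  assume al: "\<alpha> \<in> auto HG"
  then obtain w where w: "w \<in> set W24" "keyA \<alpha> = keyw w" using key_K24 unfolding K24_def by blast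
  then have "keyA \<alpha> = keyA (cj (XW w))" using key_cj by simp
  then have "\<alpha> = cj (XW w)" using key_inj[OF al cj_auto[OF XW_norm[OF w(1)]]] by simp
  then show ?thesis using w by blast
qed

lemma cj_surj: "cj ` N = auto HG"
proof
  show "cj ` N \<subseteq> auto HG" using cj_auto by blast
  show "auto HG \<subseteq> cj ` N" using cj_surj_w XW_norm by blast
qed

lemma centralizer_scalar:
  assumes g: "g \<in> carrier G" and cI: "g \<otimes>\<^bsub>G\<^esub> I = I \<otimes>\<^bsub>G\<^esub> g" and cJ: "g \<otimes>\<^bsub>G\<^esub> J = J \<otimes>\<^bsub>G\<^esub> g"
  shows "g = (e1 g, 0, 0, e1 g)"
proof -
  have "commutes p I g" "commutes p J g" using cI cJ by (simp_all add: commutes_def mat2_mult_eq)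
  then have "int p dvd e2 g \<and> int p dvd e3 g \<and> int p dvd e1 g - e4 g"
    using commute_scalar[OF pr _ _ noncomm(1)] by blast
  then show ?thesis using reduced_scalar[OF p0(1) carr_red[OF g[simplified]]] by blast
qed

lemma scalar_range: assumes g: "g \<in> carrier G" "g = (a, 0, 0, a)" shows "a \<in> {1..<int p}"
proof -
  have "cm p g = g" using carr_red g(1) by simp
  then have "a mod int p = a" using g(2) by (simp add: cm_def)
  then have "0 \<le> a" "a < int p" using mod_self_iff[of "int p" a] p0 by auto
  moreover have "a \<noteq> 0"
  proof -
    have "\<not> int p dvd det0 g" using carr_det g(1) by simp
    then show ?thesis using g(2) by (auto simp: det0_def)
  qed
  ultimately show ?thesis by simp
qed

lemma scalar_mult: "b \<in> carrier G \<Longrightarrow> mat2_mult p (a,0,0,a) b = mat2_mult p b (a,0,0,a)"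
  by (simp add: mat2_mult_eq mat_eq_iff algebra_simps)

lemma scalar_in: assumes a: "a \<in> {1..<int p}" shows "(a,0,0,a) \<in> carrier G"
proof -
  have "\<not> int p dvd a" using a zdvd_imp_le by fastforce
  then have "\<not> int p dvd a * a" using P prime_dvd_multD by blast
  moreover have "cm p (a,0,0,a) = (a,0,0,a)" using a by (simp add: cm_def)
  ultimately show ?thesis using p0 by (simp add: GL2_carrier_iff det0_def)
qed

lemma kernel_eq: "kernel NG A cj = GL2_scalars p"
proof
  show "kernel NG A cj \<subseteq> GL2_scalars p"
  proof
    fix g assume "g \<in> kernel NG A cj"
    then have g: "g \<in> N" "cj g = (\<lambda>x\<in>H. x)" by (auto simp: kernel_def)
    have gG: "g \<in> carrier G" using N_G g by blast
    have "g \<otimes>\<^bsub>G\<^esub> h \<otimes>\<^bsub>G\<^esub> inv\<^bsub>G\<^esub> g = h" if "h \<in> H" for h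
      using g(2) that cj_app[OF that, of g] by (metis restrict_apply')
    then have "g \<otimes>\<^bsub>G\<^esub> I = I \<otimes>\<^bsub>G\<^esub> g" "g \<otimes>\<^bsub>G\<^esub> J = J \<otimes>\<^bsub>G\<^esub> g"
      using G.conj_comm[OF gG] IJ_H H_G by blast+
    then have "g = (e1 g, 0, 0, e1 g)" using centralizer_scalar gG by blast
    then show "g \<in> GL2_scalars p" using scalar_range[OF gG] unfolding GL2_scalars_def by blast
  qed
  show "GL2_scalars p \<subseteq> kernel NG A cj"
  proof
    fix s assume "s \<in> GL2_scalars p"
    then obtain a where a: "s = (a,0,0,a)" "a \<in> {1..<int p}" unfolding GL2_scalars_def by blast
    have sG: "s \<in> carrier G" using scalar_in a by simp
    have c: "s \<otimes>\<^bsub>G\<^esub> h \<otimes>\<^bsub>G\<^esub> inv\<^bsub>G\<^esub> s = h" if "h \<in> H" for h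
      using G.comm_conj[OF sG H_G[OF that]] scalar_mult[OF H_G[OF that]] a(1) by simp
    then have "(\<lambda>h. s \<otimes>\<^bsub>G\<^esub> h \<otimes>\<^bsub>G\<^esub> inv\<^bsub>G\<^esub> s) ` H = H" by simp
    then have sN: "s \<in> N" using norm_iff sG by blast
    have "cj s = (\<lambda>x\<in>H. x)" using c by (auto simp: conj_aut_def)
    then show "s \<in> kernel NG A cj" using sN by (simp add: kernel_def)
  qed
qed

lemma NG_grp: "group NG" using G.subgroup_imp_group[OF N_sub] .
lemma A_grp: "group A" using group.AutoGroup[OF hgrp] .

lemma cj_group_hom: "group_hom NG A cj"
  using NG_grp A_grp cj_hom by (simp add: group_hom_def group_hom_axioms_def)

lemma Mod_iso: "NG Mod GL2_scalars p \<cong> A"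
proof -
  have "NG Mod kernel NG A cj \<cong> A"
    using group_hom.FactGroup_iso[OF cj_group_hom] cj_surj by simp
  then show ?thesis unfolding kernel_eq .
qed

lemma N_decomp:
  assumes g: "g \<in> N"
  shows "\<exists>w\<in>set W24. \<exists>a. \<not> int p dvd a \<and> cj g = cj (XW w) \<and> det0 g mod int p = (nrm w * (a * a)) mod int p"
proof -
  obtain w where w: "w \<in> set W24" "cj g = cj (XW w)" using cj_surj_w cj_auto[OF g] by blast
  define X where "X = XW w"
  have XG: "X \<in> carrier G" using XW_in w X_def by simp
  have gG: "g \<in> carrier G" using N_G g by blast
  define Y where "Y = inv\<^bsub>G\<^esub> X \<otimes>\<^bsub>G\<^esub> g"
  have YG: "Y \<in> carrier G" unfolding Y_def by (intro G.m_closed G.inv_closed XG gG)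
  have "Y \<otimes>\<^bsub>G\<^esub> h = h \<otimes>\<^bsub>G\<^esub> Y" if "h \<in> H" for h
  proof -
    have "g \<otimes>\<^bsub>G\<^esub> h \<otimes>\<^bsub>G\<^esub> inv\<^bsub>G\<^esub> g = X \<otimes>\<^bsub>G\<^esub> h \<otimes>\<^bsub>G\<^esub> inv\<^bsub>G\<^esub> X"
      using w(2) that cj_app X_def by metis
    then show ?thesis unfolding Y_def using G.conj_eq_comm[OF XG gG H_G[OF that]] by blast
  qed
  then have "Y = (e1 Y, 0, 0, e1 Y)" using centralizer_scalar[OF YG] IJ_H by blast
  then obtain a where a: "Y = (a,0,0,a)" by blast
  have "\<not> int p dvd det0 Y" using carr_det YG by simp
  then have na: "\<not> int p dvd a" using a by (auto simp: det0_def)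
  have "g = X \<otimes>\<^bsub>G\<^esub> Y" using XG gG unfolding Y_def by (simp del: GL2_simps add: G.m_assoc[symmetric])
  then have "det0 g mod int p = (det0 X * det0 Y) mod int p"
    by (simp add: mat2_mult_eq det0_cm_mod det0_mm)
  also have "\<dots> = (nrm w * (a * a)) mod int p"
  proof -
    have dY: "det0 Y = a * a" using a by (simp add: det0_def)
    have dX: "det0 X mod int p = nrm w mod int p" using det_XW X_def by simp
    show ?thesis by (metis dY dX mod_mult_left_eq)
  qed
  finally show ?thesis using w na by blast
qed

end


definition pol :: "nat list \<Rightarrow> nat \<Rightarrow> nat" where
  "pol L n = (if 1 \<le> n \<and> n \<le> 4 then L ! (n - 1) else n)"

definition permL :: "nat list \<Rightarrow> bool" where
  "permL L \<longleftrightarrow> set L = {1,2,3,4} \<and> distinct L \<and> length L = 4"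

lemma set14: "{1..4::nat} = {1,2,3,4}" by auto

lemma pol_permutes: assumes "permL L" shows "pol L permutes {1..4}"
proof (rule bij_imp_permutes)
  have inj: "inj_on (pol L) {1..4}"
  proof
    fix m n assume m: "m \<in> {1..4}" and n: "n \<in> {1..(4::nat)}" and e: "pol L m = pol L n"
    then have "L ! (m - 1) = L ! (n - 1)" by (simp add: pol_def)
    moreover have "distinct L" "length L = 4" using assms by (auto simp: permL_def)
    moreover have "m - 1 < 4" "n - 1 < 4" using m n by auto
    ultimately have "m - 1 = n - 1" using nth_eq_iff_index_eq[of L "m-1" "n-1"] by auto
    then show "m = n" using m n by auto
  qed
  moreover have "pol L ` {1..4} \<subseteq> {1..4}"
  proof
    fix y assume "y \<in> pol L ` {1..4}"
    then obtain n where n: "n \<in> {1..(4::nat)}" "y = L ! (n - 1)" by (auto simp: pol_def)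
    have "n - 1 < length L" using n(1) assms by (auto simp: permL_def)
    then have "y \<in> set L" using nth_mem n(2) by metis
    moreover have "set L = {1,2,3,4}" using assms by (simp add: permL_def)
    ultimately have "y \<in> {1,2,3,4}" by simp
    then show "y \<in> {1..4}" by auto
  qed
  ultimately have "pol L ` {1..4} = {1..4}" using endo_inj_surj[of "{1..4::nat}" "pol L"] by simp
  then show "bij_betw (pol L) {1..4} {1..4}" using inj by (simp add: bij_betw_def)
  show "\<And>x. x \<notin> {1..4} \<Longrightarrow> pol L x = x" by (auto simp: pol_def)
qed

lemma pol_comp: assumes "permL L2" "length L1 = 4" shows "pol (lcomp L1 L2) = pol L1 \<circ> pol L2"
proof
  fix n
  show "pol (lcomp L1 L2) n = (pol L1 \<circ> pol L2) n"
  proof (cases "1 \<le> n \<and> n \<le> 4")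
    case True
    then have "L2 ! (n - 1) \<in> set L2" using assms by (intro nth_mem) (auto simp: permL_def)
    moreover have "set L2 = {1,2,3,4}" using assms(1) by (simp add: permL_def)
    ultimately have "L2 ! (n - 1) \<in> {1,2,3,4}" by simp
    then have "1 \<le> L2 ! (n - 1) \<and> L2 ! (n - 1) \<le> 4" by auto
    moreover have "n - 1 < length L2" using True assms by (auto simp: permL_def)
    ultimately show ?thesis using True assms by (auto simp: pol_def lcomp_def permL_def)
  next
    case False
    then have "pol L2 n = n" by (auto simp: pol_def)
    then show ?thesis using False by (auto simp: pol_def)
  qed
qed

lemma pol_inj: assumes "length L1 = 4" "length L2 = 4" "pol L1 = pol L2" shows "L1 = L2"
proof (rule nth_equalityI)
  show "length L1 = length L2" using assms by simp
  fix i assume "i < length L1"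
  then have a: "pol L1 (i + 1) = L1 ! i" "pol L2 (i + 1) = L2 ! i" using assms(1,2) by (simp_all add: pol_def)
  have "L1 ! i = pol L1 (i + 1)" using a by simp
  also have "\<dots> = pol L2 (i + 1)" using assms(3) by simp
  also have "\<dots> = L2 ! i" using a by simp
  finally show "L1 ! i = L2 ! i" .
qed

lemma T1': "a \<in> K24 \<Longrightarrow> permL (tbl a)" using T1 by (simp add: permL_def)

lemma card_K24: "card K24 = 24"
  using T4 distinct_card[of "map keyw W24"] by (simp add: K24_def)

context qsetup begin

lemma key_img: "keyA ` auto HG = K24"
proof
  show "keyA ` auto HG \<subseteq> K24" using key_K24 by blast
  show "K24 \<subseteq> keyA ` auto HG"
  proof
    fix a assume "a \<in> K24"
    then obtain w where w: "w \<in> set W24" "a = keyw w" unfolding K24_def by blast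
    then have "a = keyA (cj (XW w))" using key_cj by simp
    then show "a \<in> keyA ` auto HG" using cj_auto XW_norm w by blast
  qed
qed

lemma key_inj_on: "inj_on keyA (auto HG)" using key_inj by (meson inj_onI)

lemma card_auto: "card (auto HG) = 24"
  using card_image[OF key_inj_on] key_img card_K24 by simp

definition F :: "(mat2 \<Rightarrow> mat2) \<Rightarrow> nat \<Rightarrow> nat" where "F \<alpha> = pol (tbl (keyA \<alpha>))"

lemma F_hom: "F \<in> hom A (sym_group 4)"
proof (rule homI)
  fix \<alpha> assume "\<alpha> \<in> carrier A"
  then show "F \<alpha> \<in> carrier (sym_group 4)"
    using pol_permutes T1' key_K24 by (simp add: F_def sym_group_carrier)
next
  fix \<alpha> \<beta> assume a: "\<alpha> \<in> carrier A" "\<beta> \<in> carrier A"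
  then have ab: "keyA \<alpha> \<in> K24" "keyA \<beta> \<in> K24" using key_K24 by auto
  have "F (\<alpha> \<otimes>\<^bsub>A\<^esub> \<beta>) = pol (tbl (kmul (keyA \<alpha>) (keyA \<beta>)))"
    using a by (simp add: F_def A_mult key_mult)
  also have "\<dots> = pol (lcomp (tbl (keyA \<alpha>)) (tbl (keyA \<beta>)))" using T2 ab by simp
  also have "\<dots> = F \<alpha> \<circ> F \<beta>" using pol_comp T1' ab by (simp add: F_def permL_def)
  finally show "F (\<alpha> \<otimes>\<^bsub>A\<^esub> \<beta>) = F \<alpha> \<otimes>\<^bsub>sym_group 4\<^esub> F \<beta>" by (simp add: sym_group_mult)
qed

lemma F_inj: "inj_on F (auto HG)"
proof
  fix \<alpha> \<beta> assume a: "\<alpha> \<in> auto HG" "\<beta> \<in> auto HG" and e: "F \<alpha> = F \<beta>"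
  then have ab: "keyA \<alpha> \<in> K24" "keyA \<beta> \<in> K24" using key_K24 by auto
  then have "tbl (keyA \<alpha>) = tbl (keyA \<beta>)" using pol_inj e T1' by (simp add: F_def permL_def)
  then have "keyA \<alpha> = keyA \<beta>" using T3 ab by blast
  then show "\<alpha> = \<beta>" using key_inj a by blast
qed

lemma A_S4: "A \<cong> sym_group 4"
proof -
  have sub: "F ` auto HG \<subseteq> carrier (sym_group 4)" using F_hom by (auto simp: hom_def)
  have c1: "card (F ` auto HG) = 24" using card_image[OF F_inj] card_auto by simp
  have c2: "card (carrier (sym_group 4)) = 24" using sym_group_card_carrier[of 4] by (simp add: fact_numeral)
  have fin: "finite (carrier (sym_group 4))" using c2 card_ge_0_finite[of "carrier (sym_group 4)"] by simp
  have "F ` auto HG = carrier (sym_group 4)" using card_subset_eq[OF fin sub] c1 c2 by simp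
  then have "bij_betw F (carrier A) (carrier (sym_group 4))" using F_inj by (simp add: bij_betw_def)
  then show ?thesis using F_hom unfolding is_iso_def iso_def by blast
qed

end


lemma (in group) index2_square:
  assumes fin: "finite (carrier G)" and K: "subgroup K G" and c: "card (carrier G) = 2 * card K"
    and b: "b \<in> carrier G"
  shows "b \<otimes> b \<in> K"
proof (rule ccontr)
  assume nb2: "b \<otimes> b \<notin> K"
  have Ksub: "K \<subseteq> carrier G" using K subgroup.subset by blast
  have nb: "b \<notin> K" using nb2 K b subgroup.m_closed by fastforce
  define L where "L = (\<lambda>k. b \<otimes> k) ` K"
  have Lsub: "L \<subseteq> carrier G" using Ksub b L_def by auto
  have disj: "K \<inter> L = {}"
  proof (rule ccontr)
    assume "K \<inter> L \<noteq> {}"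
    then obtain k k' where k: "k \<in> K" "k' \<in> K" "k' = b \<otimes> k" unfolding L_def by blast
    have kG: "k \<in> carrier G" using k(1) Ksub by blast
    have "k' \<otimes> inv k = b" using k(3) kG b by (simp add: m_assoc)
    moreover have "k' \<otimes> inv k \<in> K" using k K by (simp add: subgroup.m_closed subgroup.m_inv_closed)
    ultimately have "b \<in> K" by simp
    then show False using nb by simp
  qed
  have injL: "inj_on (\<lambda>k. b \<otimes> k) K" using Ksub b by (auto simp: inj_on_def subsetD)
  have finK: "finite K" using fin Ksub finite_subset by blast
  have "card L = card K" using card_image[OF injL] L_def by simp
  then have "card (K \<union> L) = card (carrier G)" using card_Un_disjoint[OF finK _ disj] finK L_def c by simp
  then have "K \<union> L = carrier G" using card_subset_eq[OF fin] Ksub Lsub by blast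
  then have "b \<otimes> b \<in> L" using nb2 b by blast
  then obtain k where k: "k \<in> K" "b \<otimes> b = b \<otimes> k" unfolding L_def by blast
  then have "b = k" using b Ksub by (simp add: subsetD)
  then show False using nb k by simp
qed

lemma quadres_mod: "QuadRes P (x mod P) \<longleftrightarrow> QuadRes P x"
  by (simp add: QuadRes_def cong_def)

lemma quadres_mult_sq: "QuadRes P n \<Longrightarrow> QuadRes P (n * (a * a))"
proof -
  assume "QuadRes P n"
  then obtain y where y: "[y^2 = n] (mod P)" by (auto simp: QuadRes_def)
  have eq: "(y * a)^2 = y^2 * (a * a)" by (simp add: power2_eq_square algebra_simps)
  have "[y^2 * (a * a) = n * (a * a)] (mod P)" using y by (rule cong_scalar_right)
  then have "[(y * a)^2 = n * (a * a)] (mod P)" using eq by simp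
  then show ?thesis by (auto simp: QuadRes_def)
qed

lemma quadres_div_sq:
  assumes "prime P" "\<not> P dvd a" "QuadRes P (n * (a * a))" shows "QuadRes P n"
proof -
  obtain b where b: "[a * b = 1] (mod P)" using inv_mod_exists[OF assms(1,2)] by blast
  obtain y where y: "[y^2 = n * (a * a)] (mod P)" using assms(3) by (auto simp: QuadRes_def)
  have eq: "(y * b)^2 = y^2 * (b * b)" by (simp add: power2_eq_square algebra_simps)
  have "[y^2 * (b * b) = n * (a * a) * (b * b)] (mod P)" using y by (rule cong_scalar_right)
  then have "[(y * b)^2 = n * (a * a) * (b * b)] (mod P)" using eq by simp
  moreover have "n * (a * a) * (b * b) = n * ((a * b) * (a * b))" by (simp add: algebra_simps)
  moreover have "[n * ((a * b) * (a * b)) = n * (1 * 1)] (mod P)" using b by (intro cong_mult cong_refl)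
  ultimately have "[(y * b)^2 = n] (mod P)" by (metis cong_trans mult_1_right)
  then show ?thesis by (auto simp: QuadRes_def)
qed

lemma quadres_1: "QuadRes P 1" by (auto simp: QuadRes_def intro: exI[of _ 1])
lemma quadres_4: "QuadRes P 4" unfolding QuadRes_def by (rule exI[of _ 2]) simp

context qsetup begin

lemma det_quadres:
  assumes g: "g \<in> N"
  shows "\<exists>w\<in>set W24. cj g = cj (XW w) \<and> (QuadRes (int p) (mat2_det p g) \<longleftrightarrow> QuadRes (int p) (nrm w))"
proof -
  obtain w a where w: "w \<in> set W24" "\<not> int p dvd a" "cj g = cj (XW w)"
    "det0 g mod int p = (nrm w * (a * a)) mod int p" using N_decomp[OF g] by blast
  have "QuadRes (int p) (mat2_det p g) \<longleftrightarrow> QuadRes (int p) (nrm w * (a * a))"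
    using w(4) quadres_mod by (metis mat2_det_eq)
  also have "\<dots> \<longleftrightarrow> QuadRes (int p) (nrm w)" using quadres_mult_sq quadres_div_sq[OF P w(2)] by blast
  finally show ?thesis using w by blast
qed

lemma part_a: assumes "Legendre 2 (int p) = 1" "g \<in> N" shows "QuadRes (int p) (mat2_det p g)"
proof -
  have q2: "QuadRes (int p) 2" using assms(1) by (auto simp: Legendre_def split: if_splits)
  obtain w where w: "w \<in> set W24" "QuadRes (int p) (mat2_det p g) \<longleftrightarrow> QuadRes (int p) (nrm w)"
    using det_quadres[OF assms(2)] by blast
  show ?thesis using w nrm_cases[OF w(1)] q2 quadres_1 quadres_4 by auto
qed

definition "EA = {\<alpha> \<in> auto HG. keyA \<alpha> \<in> EK}"

lemma card_EK: "card EK = 12"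
  using E1 distinct_card[of "map keyw (filter (\<lambda>w. nrm w \<noteq> 2) W24)"] by (simp add: EK_def)

lemma EK_K24: "EK \<subseteq> K24" unfolding EK_def K24_def by auto

lemma card_EA: "card EA = 12"
proof -
  have "keyA ` EA = EK"
  proof
    show "keyA ` EA \<subseteq> EK" by (auto simp: EA_def)
    show "EK \<subseteq> keyA ` EA"
    proof
      fix x assume x: "x \<in> EK"
      have "x \<in> K24" using EK_K24 x by blast
      then have "x \<in> keyA ` auto HG" using key_img by simp
      then obtain \<alpha> where "\<alpha> \<in> auto HG" "x = keyA \<alpha>" by blast
      then show "x \<in> keyA ` EA" using x by (auto simp: EA_def)
    qed
  qed
  moreover have "inj_on keyA EA" using key_inj_on by (rule inj_on_subset) (auto simp: EA_def)
  ultimately show ?thesis using card_image card_EK by metis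
qed

lemma fin_auto: "finite (auto HG)" using card_auto by (intro card_ge_0_finite) simp

lemma EA_eq:
  assumes Kg: "subgroup Kg A" "A\<lparr>carrier := Kg\<rparr> \<cong> alt_group 4"
  shows "EA = Kg"
proof -
  interpret AG: group A by (rule A_grp)
  have cK: "card Kg = 12"
  proof -
    have "card Kg = card (carrier (alt_group 4))" using iso_same_card[OF Kg(2)] by simp
    moreover have "2 * card (carrier (alt_group 4)) = 24"
      using alt_group_card_carrier[of 4] by (simp add: fact_numeral)
    ultimately show ?thesis by simp
  qed
  have Ksub: "Kg \<subseteq> auto HG" using Kg(1) subgroup.subset by fastforce
  have sq: "\<beta> \<otimes>\<^bsub>A\<^esub> \<beta> \<in> Kg" if "\<beta> \<in> auto HG" for \<beta>
    using AG.index2_square[OF _ Kg(1)] fin_auto card_auto cK that by simp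
  have sub: "EA \<subseteq> Kg"
  proof
    fix \<alpha> assume "\<alpha> \<in> EA"
    then have al: "\<alpha> \<in> auto HG" "keyA \<alpha> \<in> EK" by (auto simp: EA_def)
    then obtain b where b: "b \<in> K24" "kmul b b = keyA \<alpha>" using E3 by blast
    then have "b \<in> keyA ` auto HG" using key_img by simp
    then obtain \<beta> where be0: "\<beta> \<in> auto HG" "b = keyA \<beta>" by (rule imageE)
    then have be: "\<beta> \<in> auto HG" "keyA \<beta> = b" by simp_all
    have e1: "keyA (\<beta> \<otimes>\<^bsub>A\<^esub> \<beta>) = keyA \<alpha>" using be b key_mult A_mult by simp
    have e2: "\<beta> \<otimes>\<^bsub>A\<^esub> \<beta> \<in> auto HG" using be AG.m_closed by simp
    have "\<alpha> = \<beta> \<otimes>\<^bsub>A\<^esub> \<beta>" using key_inj[OF al(1) e2] e1 by simp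
    then show "\<alpha> \<in> Kg" using sq be by simp
  qed
  have finK: "finite Kg" using fin_auto Ksub finite_subset by blast
  show ?thesis using card_subset_eq[OF finK sub] card_EA cK by simp
qed

lemma keyw_EK: "w \<in> set W24 \<Longrightarrow> keyw w \<in> EK \<longleftrightarrow> nrm w \<noteq> 2"
  using E2 by (auto simp: EK_def)

lemma part_b:
  assumes "Legendre 2 (int p) = -1" "subgroup Kg A" "A\<lparr>carrier := Kg\<rparr> \<cong> alt_group 4" "g \<in> N"
  shows "QuadRes (int p) (mat2_det p g) \<longleftrightarrow> cj g \<in> Kg"
proof -
  have nq2: "\<not> QuadRes (int p) 2" using assms(1) by (auto simp: Legendre_def split: if_splits)
  obtain w where w: "w \<in> set W24" "cj g = cj (XW w)" "QuadRes (int p) (mat2_det p g) \<longleftrightarrow> QuadRes (int p) (nrm w)"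
    using det_quadres[OF assms(4)] by blast
  have "QuadRes (int p) (nrm w) \<longleftrightarrow> nrm w \<noteq> 2" using nrm_cases[OF w(1)] nq2 quadres_1 quadres_4 by auto
  moreover have "cj g \<in> Kg \<longleftrightarrow> nrm w \<noteq> 2"
  proof -
    have "cj g \<in> Kg \<longleftrightarrow> cj g \<in> EA" using EA_eq[OF assms(2,3)] by simp
    also have "\<dots> \<longleftrightarrow> keyw w \<in> EK" using w(2) key_cj[OF w(1)] cj_auto[OF assms(4)] by (simp add: EA_def)
    finally show ?thesis using keyw_EK[OF w(1)] by simp
  qed
  ultimately show ?thesis using w(3) by simp
qed

end

theorem lemma4p3:
  fixes p :: nat and H :: "mat2 set"
  assumes "prime p" and "p \<ge> 3"
    and "subgroup H (GL2 p)"
    and "(GL2 p)\<lparr>carrier := H\<rparr> \<cong> quaternion_group"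
  shows "conj_aut (GL2 p) H \<in> hom ((GL2 p)\<lparr>carrier := normalizer (GL2 p) H\<rparr>)
                                  (AutoGroup ((GL2 p)\<lparr>carrier := H\<rparr>))
       \<and> conj_aut (GL2 p) H ` normalizer (GL2 p) H = carrier (AutoGroup ((GL2 p)\<lparr>carrier := H\<rparr>))
       \<and> kernel ((GL2 p)\<lparr>carrier := normalizer (GL2 p) H\<rparr>)
               (AutoGroup ((GL2 p)\<lparr>carrier := H\<rparr>)) (conj_aut (GL2 p) H) = GL2_scalars p
       \<and> ((GL2 p)\<lparr>carrier := normalizer (GL2 p) H\<rparr>) Mod GL2_scalars p
           \<cong> AutoGroup ((GL2 p)\<lparr>carrier := H\<rparr>)
       \<and> AutoGroup ((GL2 p)\<lparr>carrier := H\<rparr>) \<cong> sym_group 4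
       \<and> (Legendre 2 (int p) = 1 \<longrightarrow>
           (\<forall>g \<in> normalizer (GL2 p) H. QuadRes (int p) (mat2_det p g)))
       \<and> (Legendre 2 (int p) = -1 \<longrightarrow>
           (\<forall>K. subgroup K (AutoGroup ((GL2 p)\<lparr>carrier := H\<rparr>)) \<and>
                (AutoGroup ((GL2 p)\<lparr>carrier := H\<rparr>))\<lparr>carrier := K\<rparr> \<cong> alt_group 4 \<longrightarrow>
              (\<forall>g \<in> normalizer (GL2 p) H.
                 QuadRes (int p) (mat2_det p g) \<longleftrightarrow> conj_aut (GL2 p) H g \<in> K)))"
proof -
  from assms(4) obtain \<psi> where \<psi>: "\<psi> \<in> iso ((GL2 p)\<lparr>carrier := H\<rparr>) quaternion_group"
    unfolding is_iso_def by blast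
  interpret qsetup p H \<psi> unfolding qsetup_def using assms(1-3) \<psi> by blast
  show ?thesis using cj_hom cj_surj kernel_eq Mod_iso A_S4 part_a part_b by auto
qed

end
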